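(* Let $\mathcal{H}$ be a finite-dimensional Hilbert space, $T:\mathcal{B}(\mathcal{H})\to\mathcal{B}(\mathcal{H})$ a channel, and let $E:\mathcal{B}(\mathcal{H}^{\otimes n})\to\mathcal{B}(\mathcal{H}^{\otimes m})$ and $D:\mathcal{B}(\mathcal{H}^{\otimes m})\to\mathcal{B}(\mathcal{H}^{\otimes n})$ be encoding and decoding channels (coding $m$ systems into $n$ systems) which correct $f$ errors. Suppose that $$\|T-\mathrm{id}\|_{cb}\le\frac{f+1}{n-f-1}.$$ Then $$\|E\,T^{\otimes n}D-\mathrm{id}\|_{cb}\le\|T-\mathrm{id}\|_{cb}^{\,f+1}\;2^{nH_2((f+1)/n)},$$ where $H_2(r)=-r\log_2r-(1-r)\log_2(1-r)$.
   Context: A channel is a completely positive unital linear map between operator algebras $\mathcal{B}(\cdot)$ of finite-dimensional Hilbert spaces (Heisenberg picture); $\mathrm{id}$ denotes the identity map. The cb-norm of a linear map $S:\mathcal{B}(\mathcal{K}_2)\to\mathcal{B}(\mathcal{K}_1)$ is $\|S\|_{cb}=\sup\{\|(S\otimes\mathrm{id}_{\mathcal{B}(\mathbb{C}^k)})(A)\|:k\in\mathbb{N},\ A\in\mathcal{B}(\mathcal{K}_2\otimes\mathbb{C}^k),\ \|A\|\le1\}$. The pair $(E,D)$ corrects $f$ errors if $E(T_1\otimes\cdots\otimes T_n)D=\mathrm{id}$ for all channels $T_1,\dots,T_n:\mathcal{B}(\mathcal{H})\to\mathcal{B}(\mathcal{H})$ such that $T_i\neq\mathrm{id}$ for at most $f$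 indices $i$. *)

theory Defs
  imports Complex_Main "Jordan_Normal_Form.Matrix"
begin

text \<open>B(C^a) is represented by complex a x a matrices (carrier_mat a a).
  A linear map S : B(C^a) -> B(C^b) is a function on matrices, considered on carrier_mat a a.
  H^{tensor n} is C^(d^n), with Kronecker ordering (first factor most significant).\<close>

definition vnorm :: "complex vec \<Rightarrow> real" where
  "vnorm v = sqrt (\<Sum>i<dim_vec v. (cmod (v $ i))^2)"

definition opnorm :: "complex mat \<Rightarrow> real" where
  "opnorm A = Sup {vnorm (A *\<^sub>v v) | v. dim_vec v = dim_col A \<and> vnorm v \<le> 1}"

definition eunit :: "nat \<Rightarrow> nat \<Rightarrow> nat \<Rightarrow> complex mat" where
  "eunit a i j = mat a a (\<lambda>(r,s). if r = i \<and> s = j then 1 else 0)"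

text \<open>Tensor product S (x) R of linear maps S : B(C^a1) -> B(C^b1), R : B(C^a2) -> B(C^b2),
  acting on B(C^a1 (x) C^a2) = B(C^(a1*a2)), defined by linear extension of
  (S (x) R)(E_ij (x) E_kl) = S(E_ij) (x) R(E_kl).\<close>
definition map_tensor ::
  "nat \<Rightarrow> nat \<Rightarrow> nat \<Rightarrow> nat \<Rightarrow> (complex mat \<Rightarrow> complex mat) \<Rightarrow> (complex mat \<Rightarrow> complex mat)
    \<Rightarrow> complex mat \<Rightarrow> complex mat" where
  "map_tensor a1 b1 a2 b2 S R A = mat (b1*b2) (b1*b2) (\<lambda>(p,q).
     \<Sum>i<a1. \<Sum>j<a1. \<Sum>k<a2. \<Sum>l<a2.
       A $$ (i*a2 + k, j*a2 + l) * S (eunit a1 i j) $$ (p div b2, q div b2)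
         * R (eunit a2 k l) $$ (p mod b2, q mod b2))"

definition lin_map :: "nat \<Rightarrow> nat \<Rightarrow> (complex mat \<Rightarrow> complex mat) \<Rightarrow> bool" where
  "lin_map a b S \<longleftrightarrow> (\<forall>A \<in> carrier_mat a a. S A \<in> carrier_mat b b) \<and>
     (\<forall>A \<in> carrier_mat a a. \<forall>B \<in> carrier_mat a a. S (A + B) = S A + S B) \<and>
     (\<forall>A \<in> carrier_mat a a. \<forall>c. S (c \<cdot>\<^sub>m A) = c \<cdot>\<^sub>m S A)"

definition psd :: "nat \<Rightarrow> complex mat \<Rightarrow> bool" where
  "psd N A \<longleftrightarrow> A \<in> carrier_mat N N \<and>
     (\<forall>v. dim_vec v = N \<longrightarrow>
        (let z = (\<Sum>i<N. cnj (v $ i) * (A *\<^sub>v v) $ i) in Im z = 0 \<and> Re z \<ge> 0))"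

definition completely_positive :: "nat \<Rightarrow> nat \<Rightarrow> (complex mat \<Rightarrow> complex mat) \<Rightarrow> bool" where
  "completely_positive a b S \<longleftrightarrow>
     (\<forall>k>0. \<forall>A. psd (a*k) A \<longrightarrow> psd (b*k) (map_tensor a b k k S (\<lambda>X. X) A))"

text \<open>Channel B(C^a) -> B(C^b) (Heisenberg picture): completely positive unital linear map.\<close>
definition channel :: "nat \<Rightarrow> nat \<Rightarrow> (complex mat \<Rightarrow> complex mat) \<Rightarrow> bool" where
  "channel a b S \<longleftrightarrow> lin_map a b S \<and> completely_positive a b S \<and> S (1\<^sub>m a) = 1\<^sub>m b"

definition cb_norm :: "nat \<Rightarrow> nat \<Rightarrow> (complex mat \<Rightarrow> complex mat) \<Rightarrow> real" where
  "cb_norm a b S = Sup {opnorm (map_tensor a b k k S (\<lambda>X. X) A) | k A.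
      k > 0 \<and> A \<in> carrier_mat (a*k) (a*k) \<and> opnorm A \<le> 1}"

fun tensor_list :: "nat \<Rightarrow> (complex mat \<Rightarrow> complex mat) list \<Rightarrow> complex mat \<Rightarrow> complex mat" where
  "tensor_list d [] = (\<lambda>X. X)"
| "tensor_list d (T # Ts) = map_tensor d d (d ^ length Ts) (d ^ length Ts) T (tensor_list d Ts)"

definition tensor_pow :: "nat \<Rightarrow> (complex mat \<Rightarrow> complex mat) \<Rightarrow> nat \<Rightarrow> complex mat \<Rightarrow> complex mat" where
  "tensor_pow d T n = tensor_list d (replicate n T)"

definition corrects :: "nat \<Rightarrow> nat \<Rightarrow> nat \<Rightarrow> nat \<Rightarrow> (complex mat \<Rightarrow> complex mat)
    \<Rightarrow> (complex mat \<Rightarrow> complex mat) \<Rightarrow> bool" where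
  "corrects d m n f E D \<longleftrightarrow>
     (\<forall>Ts. length Ts = n \<longrightarrow> (\<forall>T \<in> set Ts. channel d d T) \<longrightarrow>
        card {i. i < n \<and> \<not> (\<forall>A \<in> carrier_mat d d. (Ts ! i) A = A)} \<le> f \<longrightarrow>
        (\<forall>A \<in> carrier_mat (d^m) (d^m). E (tensor_list d Ts (D A)) = A))"

text \<open>Binary entropy (with 0 log 0 = 0, automatic since 0 * _ = 0).\<close>
definition H2 :: "real \<Rightarrow> real" where
  "H2 r = - r * log 2 r - (1 - r) * log 2 (1 - r)"

end

theory Submission
  imports Defs "HOL-Analysis.L2_Norm"
begin

definition fn :: "nat \<Rightarrow> (nat \<Rightarrow> complex) \<Rightarrow> real" where
  "fn N x = L2_set (\<lambda>i. cmod (x i)) {..<N}"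

definition ip :: "nat \<Rightarrow> (nat \<Rightarrow> complex) \<Rightarrow> (nat \<Rightarrow> complex) \<Rightarrow> complex" where
  "ip N x y = (\<Sum>i<N. cnj (x i) * y i)"

lemma vnorm_fn: "vnorm v = fn (dim_vec v) (\<lambda>i. v $ i)"
  unfolding vnorm_def fn_def L2_set_def by simp

lemma fn_nonneg[simp]: "0 \<le> fn N x"
  unfolding fn_def by simp

lemma fn_cong: "(\<And>i. i < N \<Longrightarrow> x i = y i) \<Longrightarrow> fn N x = fn N y"
  unfolding fn_def by (rule L2_set_cong) auto

lemma ip_cs: "cmod (ip N x y) \<le> fn N x * fn N y"
proof -
  have "cmod (ip N x y) \<le> (\<Sum>i<N. cmod (cnj (x i) * y i))"
    unfolding ip_def by (rule norm_sum)
  also have "\<dots> = (\<Sum>i<N. \<bar>cmod (x i)\<bar> * \<bar>cmod (y i)\<bar>)"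
    by (simp add: norm_mult)
  also have "\<dots> \<le> fn N x * fn N y"
    unfolding fn_def by (rule L2_set_mult_ineq)
  finally show ?thesis .
qed

lemma ip_self: "ip N x x = complex_of_real ((fn N x)^2)"
proof -
  have "ip N x x = (\<Sum>i<N. complex_of_real ((cmod (x i))^2))"
    unfolding ip_def by (intro sum.cong refl) (metis complex_norm_square mult.commute)
  also have "\<dots> = complex_of_real (\<Sum>i<N. (cmod (x i))^2)" by simp
  also have "(\<Sum>i<N. (cmod (x i))^2) = (fn N x)^2"
    unfolding fn_def L2_set_def by (simp add: sum_nonneg)
  finally show ?thesis .
qed

lemma fn_sum:
  assumes "finite I"
  shows "fn N (\<lambda>i. \<Sum>s\<in>I. g s i) \<le> (\<Sum>s\<in>I. fn N (g s))"
  using assms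
proof (induction I rule: finite_induct)
  case empty
  then show ?case unfolding fn_def by (simp add: L2_set_def)
next
  case (insert a I)
  have "fn N (\<lambda>i. \<Sum>s\<in>insert a I. g s i) = fn N (\<lambda>i. g a i + (\<Sum>s\<in>I. g s i))"
    using insert by simp
  also have "\<dots> \<le> L2_set (\<lambda>i. cmod (g a i) + cmod (\<Sum>s\<in>I. g s i)) {..<N}"
    unfolding fn_def by (rule L2_set_mono) (auto intro: norm_triangle_ineq)
  also have "\<dots> \<le> fn N (g a) + fn N (\<lambda>i. \<Sum>s\<in>I. g s i)"
    unfolding fn_def by (rule L2_set_triangle_ineq)
  also have "\<dots> \<le> fn N (g a) + (\<Sum>s\<in>I. fn N (g s))" using insert by simp
  finally show ?case using insert by simp
qed

lemma fn_scale: "fn N (\<lambda>i. c * x i) = cmod c * fn N x"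
  unfolding fn_def by (simp add: norm_mult L2_set_right_distrib)

lemma fn_reindex_le:
  assumes "inj_on s {..<N}" "s ` {..<N} \<subseteq> {..<M}"
  shows "fn N (\<lambda>i. x (s i)) \<le> fn M x"
proof -
  have "fn N (\<lambda>i. x (s i)) = sqrt (\<Sum>i\<in>s ` {..<N}. (cmod (x i))^2)"
    unfolding fn_def L2_set_def using sum.reindex[OF assms(1), of "\<lambda>i. (cmod (x i))^2"] by simp
  also have "\<dots> \<le> sqrt (\<Sum>i<M. (cmod (x i))^2)"
    using assms(2) by (intro real_sqrt_le_mono sum_mono2) auto
  finally show ?thesis unfolding fn_def L2_set_def .
qed

lemma fn_reindex_eq:
  assumes "inj_on s {..<N}" "s ` {..<N} \<subseteq> {..<M}" "\<And>j. j < M \<Longrightarrow> j \<notin> s ` {..<N} \<Longrightarrow> x j = 0"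
  shows "fn N (\<lambda>i. x (s i)) = fn M x"
proof -
  have "fn N (\<lambda>i. x (s i)) = sqrt (\<Sum>i\<in>s ` {..<N}. (cmod (x i))^2)"
    unfolding fn_def L2_set_def using sum.reindex[OF assms(1), of "\<lambda>i. (cmod (x i))^2"] by simp
  also have "(\<Sum>i\<in>s ` {..<N}. (cmod (x i))^2) = (\<Sum>i<M. (cmod (x i))^2)"
    using assms(2,3) by (intro sum.mono_neutral_left) auto
  finally show ?thesis unfolding fn_def L2_set_def .
qed

lemma fn_zero: "fn N x = 0 \<Longrightarrow> i < N \<Longrightarrow> x i = 0"
  unfolding fn_def using L2_set_eq_0_iff[of "{..<N}" "\<lambda>i. cmod (x i)"] by auto

lemma fn_le_sum: "fn N x \<le> (\<Sum>i<N. cmod (x i))"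
  unfolding fn_def by (rule L2_set_le_sum) simp

lemma fn_member: "i < N \<Longrightarrow> cmod (x i) \<le> fn N x"
  unfolding fn_def by (rule member_le_L2_set) auto

lemma mv_index:
  assumes "i < dim_row A" "dim_vec v = dim_col A"
  shows "(A *\<^sub>v v) $ i = (\<Sum>j<dim_col A. A $$ (i,j) * v $ j)"
  using assms by (simp add: index_mult_mat_vec scalar_prod_def atLeast0LessThan)

lemma vnorm_mv: assumes "dim_vec v = dim_col A" shows
   "vnorm (A *\<^sub>v v) = fn (dim_row A) (\<lambda>i. \<Sum>j<dim_col A. A $$ (i,j) * v $ j)"
  unfolding vnorm_fn dim_mult_mat_vec by (intro fn_cong) (metis mv_index assms)

lemma vnorm_mv_bound:
  assumes "dim_vec v = dim_col A"
  shows "vnorm (A *\<^sub>v v) \<le> (\<Sum>i<dim_row A. \<Sum>j<dim_col A. cmod (A $$ (i,j))) * vnorm v"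
proof -
  have "vnorm (A *\<^sub>v v) \<le> (\<Sum>i<dim_row A. cmod (\<Sum>j<dim_col A. A $$ (i,j) * v $ j))"
    unfolding vnorm_mv[OF assms] by (rule fn_le_sum)
  also have "\<dots> \<le> (\<Sum>i<dim_row A. \<Sum>j<dim_col A. cmod (A $$ (i,j)) * vnorm v)"
  proof (intro sum_mono)
    fix i assume "i \<in> {..<dim_row A}"
    have "cmod (\<Sum>j<dim_col A. A $$ (i,j) * v $ j) \<le> (\<Sum>j<dim_col A. cmod (A $$ (i,j) * v $ j))"
      by (rule norm_sum)
    also have "\<dots> \<le> (\<Sum>j<dim_col A. cmod (A $$ (i,j)) * vnorm v)"
    proof (intro sum_mono)
      fix j assume "j \<in> {..<dim_col A}"
      then have "cmod (v $ j) \<le> vnorm v" unfolding vnorm_fn using assms by (intro fn_member) auto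
      then show "cmod (A $$ (i,j) * v $ j) \<le> cmod (A $$ (i,j)) * vnorm v"
        by (simp add: norm_mult mult_left_mono)
    qed
    finally show "cmod (\<Sum>j<dim_col A. A $$ (i,j) * v $ j) \<le> (\<Sum>j<dim_col A. cmod (A $$ (i,j)) * vnorm v)" .
  qed
  also have "\<dots> = (\<Sum>i<dim_row A. \<Sum>j<dim_col A. cmod (A $$ (i,j))) * vnorm v"
    by (simp add: sum_distrib_right)
  finally show ?thesis .
qed

definition opset :: "complex mat \<Rightarrow> real set" where
  "opset A = {vnorm (A *\<^sub>v v) | v. dim_vec v = dim_col A \<and> vnorm v \<le> 1}"

lemma opnorm_opset: "opnorm A = Sup (opset A)"
  unfolding opnorm_def opset_def ..

lemma opset_bdd: "bdd_above (opset A)"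
proof -
  let ?K = "(\<Sum>i<dim_row A. \<Sum>j<dim_col A. cmod (A $$ (i,j)))"
  have K0: "0 \<le> ?K" by (intro sum_nonneg) auto
  show ?thesis unfolding bdd_above_def opset_def
  proof (intro exI[of _ ?K] ballI)
    fix x assume "x \<in> {vnorm (A *\<^sub>v v) | v. dim_vec v = dim_col A \<and> vnorm v \<le> 1}"
    then obtain v where v: "x = vnorm (A *\<^sub>v v)" "dim_vec v = dim_col A" "vnorm v \<le> 1" by auto
    have "x \<le> ?K * vnorm v" using vnorm_mv_bound[OF v(2)] v(1) by simp
    also have "\<dots> \<le> ?K" using v(3) K0 by (simp add: mult_left_le)
    finally show "x \<le> ?K" .
  qed
qed

lemma vnorm_nonneg[simp]: "0 \<le> vnorm v" unfolding vnorm_fn by simp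

lemma zero_in_opset: "vnorm (A *\<^sub>v 0\<^sub>v (dim_col A)) \<in> opset A"
  unfolding opset_def by (rule CollectI, rule exI[of _ "0\<^sub>v (dim_col A)"]) (simp add: vnorm_def)

lemma vnorm_zero_mv: "vnorm (A *\<^sub>v 0\<^sub>v (dim_col A)) = 0"
  unfolding vnorm_mv[of "0\<^sub>v (dim_col A)" A, simplified] fn_def L2_set_def by simp

lemma opnorm_nonneg[simp]: "0 \<le> opnorm A"
  unfolding opnorm_opset using cSup_upper[OF zero_in_opset opset_bdd] vnorm_zero_mv by simp

lemma opnorm_upper: "dim_vec v = dim_col A \<Longrightarrow> vnorm v \<le> 1 \<Longrightarrow> vnorm (A *\<^sub>v v) \<le> opnorm A"
  unfolding opnorm_opset by (rule cSup_upper[OF _ opset_bdd]) (auto simp: opset_def)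

lemma opnorm_le:
  assumes "\<And>v. dim_vec v = dim_col A \<Longrightarrow> vnorm v \<le> 1 \<Longrightarrow> vnorm (A *\<^sub>v v) \<le> K"
  shows "opnorm A \<le> K"
  unfolding opnorm_opset
  by (rule cSup_least) (use zero_in_opset assms in \<open>auto simp: opset_def\<close>)

lemma opnorm_mv:
  assumes "dim_vec v = dim_col A"
  shows "vnorm (A *\<^sub>v v) \<le> opnorm A * vnorm v"
proof (cases "vnorm v = 0")
  case True
  then have "\<And>j. j < dim_col A \<Longrightarrow> v $ j = 0" unfolding vnorm_fn using assms fn_zero by force
  then have "vnorm (A *\<^sub>v v) = 0" unfolding vnorm_mv[OF assms] fn_def L2_set_def by simp
  then show ?thesis using True by simp
next
  case False
  define t where "t = vnorm v"
  have t: "t > 0" using False vnorm_nonneg[of v] unfolding t_def by linarith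
  define w where "w = vec (dim_col A) (\<lambda>j. v $ j / t)"
  have dw: "dim_vec w = dim_col A" unfolding w_def by simp
  have "vnorm w = fn (dim_col A) (\<lambda>i. (1 / t) * v $ i)" unfolding vnorm_fn[of w] dw
    by (rule fn_cong) (simp add: w_def)
  also have "\<dots> = cmod (1 / t) * fn (dim_col A) (\<lambda>i. v $ i)" by (rule fn_scale)
  also have "\<dots> = cmod (1 / t) * vnorm v" using assms by (simp add: vnorm_fn)
  finally have "vnorm w = cmod (1 / t) * vnorm v" .
  then have "vnorm w = 1" using t by (simp add: t_def norm_divide)
  then have "vnorm (A *\<^sub>v w) \<le> opnorm A" using opnorm_upper[OF dw] by simp
  moreover have "vnorm (A *\<^sub>v w) = cmod (1 / t) * vnorm (A *\<^sub>v v)"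
    unfolding vnorm_mv[OF dw] vnorm_mv[OF assms] fn_scale[symmetric]
    by (intro fn_cong) (simp add: w_def sum_distrib_left sum_divide_distrib)
  ultimately have "vnorm (A *\<^sub>v v) / t \<le> opnorm A" using t by (simp add: norm_divide)
  then show ?thesis using t by (simp add: divide_le_eq mult.commute t_def)
qed

lemma opnorm_le':
  assumes "0 \<le> K" "\<And>v. dim_vec v = dim_col A \<Longrightarrow> vnorm (A *\<^sub>v v) \<le> K * vnorm v"
  shows "opnorm A \<le> K"
proof (rule opnorm_le)
  fix v assume "dim_vec v = dim_col A" "vnorm v \<le> 1"
  then show "vnorm (A *\<^sub>v v) \<le> K" using assms(2)[of v] assms(1) mult_left_le[of "vnorm v" K] by simp
qed

declare index_mult_mat_vec[simp del]

lemma opnorm_reindex: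
  fixes A B :: "complex mat"
  assumes B: "B \<in> carrier_mat RB CB" and A: "A \<in> carrier_mat RA CA"
    and s1: "inj_on s {..<RB}" and s2: "s ` {..<RB} \<subseteq> {..<RA}"
    and t1: "inj_on t {..<CB}" and t2: "t ` {..<CB} \<subseteq> {..<CA}"
    and eq: "\<And>x y. x < RB \<Longrightarrow> y < CB \<Longrightarrow> B $$ (x,y) = A $$ (s x, t y)"
  shows "opnorm B \<le> opnorm A"
proof (rule opnorm_le'[OF opnorm_nonneg])
  fix v :: "complex vec" assume dv: "dim_vec v = dim_col B"
  then have dv': "dim_vec v = CB" using B by simp
  define w where "w = vec CA (\<lambda>y'. if y' \<in> t ` {..<CB} then v $ (inv_into {..<CB} t y') else 0)"
  have dw: "dim_vec w = dim_col A" using A unfolding w_def by simp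
  have wt: "\<And>i. i < CB \<Longrightarrow> w $ t i = v $ i"
    unfolding w_def using t1 t2 by (auto simp: inv_into_f_f)
  have "vnorm v = fn CB (\<lambda>i. w $ t i)" unfolding vnorm_fn dv' by (rule fn_cong) (simp add: wt)
  also have "\<dots> = fn CA (\<lambda>i. w $ i)"
    by (rule fn_reindex_eq[OF t1 t2]) (auto simp: w_def)
  also have "\<dots> = vnorm w" using dw A by (simp add: vnorm_fn)
  finally have vw: "vnorm v = vnorm w" .
  have key: "(B *\<^sub>v v) $ x = (A *\<^sub>v w) $ (s x)" if x: "x < RB" for x
  proof -
    have sx: "s x < RA" using s2 x by auto
    have "(B *\<^sub>v v) $ x = (\<Sum>y<CB. B $$ (x,y) * v $ y)"
      using mv_index[of x B v] x B dv by simp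
    also have "\<dots> = (\<Sum>y<CB. A $$ (s x, t y) * w $ t y)"
      by (intro sum.cong refl) (simp add: eq x wt)
    also have "\<dots> = (\<Sum>y'\<in>t ` {..<CB}. A $$ (s x, y') * w $ y')"
      using sum.reindex[OF t1, of "\<lambda>y'. A $$ (s x, y') * w $ y'"] by simp
    also have "\<dots> = (\<Sum>y'<CA. A $$ (s x, y') * w $ y')"
      using t2 by (intro sum.mono_neutral_left) (auto simp: w_def)
    also have "\<dots> = (A *\<^sub>v w) $ (s x)"
      using mv_index[of "s x" A w] sx A dw by simp
    finally show ?thesis .
  qed
  have "vnorm (B *\<^sub>v v) = fn RB (\<lambda>x. (B *\<^sub>v v) $ x)" using B by (simp add: vnorm_fn)
  also have "\<dots> = fn RB (\<lambda>x. (A *\<^sub>v w) $ (s x))" by (rule fn_cong) (simp add: key)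
  also have "\<dots> \<le> fn RA (\<lambda>x. (A *\<^sub>v w) $ x)" by (rule fn_reindex_le[OF s1 s2])
  also have "\<dots> = vnorm (A *\<^sub>v w)" using A by (simp add: vnorm_fn)
  also have "\<dots> \<le> opnorm A * vnorm w" by (rule opnorm_mv[OF dw])
  finally show "vnorm (B *\<^sub>v v) \<le> opnorm A * vnorm v" using vw by simp
qed

lemma opnorm_sum:
  fixes M :: "complex mat"
  assumes M: "M \<in> carrier_mat R C" and I: "finite I" and G: "\<And>s. s\<in>I \<Longrightarrow> G s \<in> carrier_mat R C"
    and eq: "\<And>x y. x<R \<Longrightarrow> y<C \<Longrightarrow> M $$ (x,y) = (\<Sum>s\<in>I. c s * G s $$ (x,y))"
  shows "opnorm M \<le> (\<Sum>s\<in>I. cmod (c s) * opnorm (G s))"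
proof (rule opnorm_le')
  show "0 \<le> (\<Sum>s\<in>I. cmod (c s) * opnorm (G s))" by (intro sum_nonneg) simp
next
  fix v :: "complex vec" assume dv: "dim_vec v = dim_col M"
  then have dv': "dim_vec v = C" using M by simp
  have key: "(M *\<^sub>v v) $ x = (\<Sum>s\<in>I. c s * (G s *\<^sub>v v) $ x)" if x: "x < R" for x
  proof -
    have "(M *\<^sub>v v) $ x = (\<Sum>y<C. M $$ (x,y) * v $ y)"
      using mv_index[of x M v] x M dv by simp
    also have "\<dots> = (\<Sum>y<C. \<Sum>s\<in>I. c s * (G s $$ (x,y) * v $ y))"
      by (intro sum.cong refl) (simp add: eq x sum_distrib_right mult.assoc)
    also have "\<dots> = (\<Sum>s\<in>I. c s * (\<Sum>y<C. G s $$ (x,y) * v $ y))"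
      by (subst sum.swap) (simp add: sum_distrib_left)
    also have "\<dots> = (\<Sum>s\<in>I. c s * (G s *\<^sub>v v) $ x)"
    proof (intro sum.cong refl)
      fix s assume "s \<in> I"
      then have "G s \<in> carrier_mat R C" by (rule G)
      then show "c s * (\<Sum>y<C. G s $$ (x,y) * v $ y) = c s * (G s *\<^sub>v v) $ x"
        using mv_index[of x "G s" v] x dv' by simp
    qed
    finally show ?thesis .
  qed
  have "vnorm (M *\<^sub>v v) = fn R (\<lambda>x. (M *\<^sub>v v) $ x)" using M by (simp add: vnorm_fn)
  also have "\<dots> = fn R (\<lambda>x. \<Sum>s\<in>I. c s * (G s *\<^sub>v v) $ x)" by (rule fn_cong) (simp add: key)
  also have "\<dots> \<le> (\<Sum>s\<in>I. fn R (\<lambda>x. c s * (G s *\<^sub>v v) $ x))" by (rule fn_sum[OF I])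
  also have "\<dots> = (\<Sum>s\<in>I. cmod (c s) * vnorm (G s *\<^sub>v v))"
    by (intro sum.cong refl) (use G in \<open>auto simp: fn_scale vnorm_fn\<close>)
  also have "\<dots> \<le> (\<Sum>s\<in>I. cmod (c s) * (opnorm (G s) * vnorm v))"
    by (intro sum_mono mult_left_mono opnorm_mv) (use G dv' in force)+
  also have "\<dots> = (\<Sum>s\<in>I. cmod (c s) * opnorm (G s)) * vnorm v"
    by (simp add: sum_distrib_right mult.assoc)
  finally show "vnorm (M *\<^sub>v v) \<le> (\<Sum>s\<in>I. cmod (c s) * opnorm (G s)) * vnorm v" .
qed

lemma map_tensor_carrier[simp]: "map_tensor a1 b1 a2 b2 S R A \<in> carrier_mat (b1*b2) (b1*b2)"
  unfolding map_tensor_def by simp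

lemma map_tensor_dims[simp]: "dim_row (map_tensor a1 b1 a2 b2 S R A) = b1*b2"
  "dim_col (map_tensor a1 b1 a2 b2 S R A) = b1*b2"
  unfolding map_tensor_def by simp_all

lemma eunit_index: "r < a \<Longrightarrow> s < a \<Longrightarrow> eunit a i j $$ (r,s) = (if r = i \<and> s = j then 1 else 0)"
  unfolding eunit_def by simp

lemma eunit_carrier[simp]: "eunit a i j \<in> carrier_mat a a"
  unfolding eunit_def by simp

lemma sum_collapse2:
  fixes g :: "nat \<Rightarrow> nat \<Rightarrow> complex"
  assumes "r0 < k" "s0 < k"
  shows "(\<Sum>r<k. \<Sum>s<k. g r s * (if r0 = r \<and> s0 = s then 1 else 0)) = g r0 s0"
proof -
  have "(\<Sum>r<k. \<Sum>s<k. g r s * (if r0 = r \<and> s0 = s then 1 else 0))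
      = (\<Sum>r<k. if r0 = r then g r s0 else 0)"
    by (intro sum.cong refl) (use assms in \<open>auto simp: if_distrib cong: if_cong\<close>)
  also have "\<dots> = g r0 s0" using assms by simp
  finally show ?thesis .
qed

lemma amp_index:
  assumes "P < b*k" "Q < b*k"
  shows "map_tensor a b k k L (\<lambda>X. X) A $$ (P,Q) =
    (\<Sum>i<a. \<Sum>j<a. A $$ (i*k + P mod k, j*k + Q mod k) * L (eunit a i j) $$ (P div k, Q div k))"
proof -
  have k: "0 < k" using assms by (cases k) auto
  have "map_tensor a b k k L (\<lambda>X. X) A $$ (P,Q) =
    (\<Sum>i<a. \<Sum>j<a. \<Sum>r<k. \<Sum>s<k. (A $$ (i*k + r, j*k + s) * L (eunit a i j) $$ (P div k, Q div k))
        * (if P mod k = r \<and> Q mod k = s then 1 else 0))"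
    unfolding map_tensor_def using assms k
    by (simp add: eunit_index cong: if_cong)
  also have "\<dots> = (\<Sum>i<a. \<Sum>j<a. A $$ (i*k + P mod k, j*k + Q mod k) * L (eunit a i j) $$ (P div k, Q div k))"
    by (intro sum.cong refl sum_collapse2) (use k in auto)
  finally show ?thesis .
qed

lemma lin_expand:
  assumes S: "lin_map a b S" and X: "X \<in> carrier_mat a a" and pq: "p < b" "q < b"
  shows "S X $$ (p,q) = (\<Sum>i<a. \<Sum>j<a. X $$ (i,j) * S (eunit a i j) $$ (p,q))"
proof -
  define XF where "XF F = mat a a (\<lambda>(r,s). if (r,s) \<in> F then X $$ (r,s) else 0)" for F
  have Sc: "\<And>A. A \<in> carrier_mat a a \<Longrightarrow> S A \<in> carrier_mat b b"
   and Sa: "\<And>A B. A \<in> carrier_mat a a \<Longrightarrow> B \<in> carrier_mat a a \<Longrightarrow> S (A + B) = S A + S B"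
   and Ss: "\<And>A c. A \<in> carrier_mat a a \<Longrightarrow> S (c \<cdot>\<^sub>m A) = c \<cdot>\<^sub>m S A"
    using S unfolding lin_map_def by auto
  have XFc: "XF F \<in> carrier_mat a a" for F unfolding XF_def by simp
  have main: "S (XF F) $$ (p,q) = (\<Sum>x\<in>F. X $$ x * S (eunit a (fst x) (snd x)) $$ (p,q))"
    if "finite F" "F \<subseteq> {..<a} \<times> {..<a}" for F
    using that
  proof (induction F rule: finite_induct)
    case empty
    have "XF {} = 0 \<cdot>\<^sub>m (0\<^sub>m a a)" unfolding XF_def by (intro eq_matI) auto
    then have "S (XF {}) = 0 \<cdot>\<^sub>m S (0\<^sub>m a a)" using Ss[of "0\<^sub>m a a" 0] by simp
    then show ?case using Sc[of "0\<^sub>m a a"] pq by simp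
  next
    case (insert x F)
    obtain i j where x: "x = (i,j)" by force
    have ij: "i < a" "j < a" using insert x by auto
    have "XF (insert x F) = XF F + X $$ (i,j) \<cdot>\<^sub>m eunit a i j"
      unfolding XF_def x using insert x by (intro eq_matI) (auto simp: eunit_def)
    then have "S (XF (insert x F)) = S (XF F) + X $$ (i,j) \<cdot>\<^sub>m S (eunit a i j)"
      using Sa[OF XFc, of "X $$ (i,j) \<cdot>\<^sub>m eunit a i j" F] Ss[of "eunit a i j"] by simp
    then show ?case using insert x pq Sc[OF XFc, of F] Sc[of "eunit a i j"] by simp
  qed
  have "XF ({..<a} \<times> {..<a}) = X" unfolding XF_def using X by (intro eq_matI) auto
  then have "S X $$ (p,q) = (\<Sum>x\<in>{..<a} \<times> {..<a}. X $$ x * S (eunit a (fst x) (snd x)) $$ (p,q))"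
    using main[of "{..<a} \<times> {..<a}"] by simp
  also have "\<dots> = (\<Sum>i<a. \<Sum>j<a. X $$ (i,j) * S (eunit a i j) $$ (p,q))"
    by (simp add: sum.cartesian_product split_beta)
  finally show ?thesis .
qed

lemma amp_comp:
  assumes S: "lin_map b c S" and R: "\<And>X. X \<in> carrier_mat a a \<Longrightarrow> R X \<in> carrier_mat b b"
  shows "map_tensor b c k k S (\<lambda>X. X) (map_tensor a b k k R (\<lambda>X. X) A)
       = map_tensor a c k k (\<lambda>X. S (R X)) (\<lambda>X. X) A"
proof (rule eq_matI)
  fix P Q assume PQ: "P < dim_row (map_tensor a c k k (\<lambda>X. S (R X)) (\<lambda>X. X) A)"
    "Q < dim_col (map_tensor a c k k (\<lambda>X. S (R X)) (\<lambda>X. X) A)"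
  then have PQ': "P < c*k" "Q < c*k" by auto
  have k: "0 < k" using PQ' by (cases k) auto
  have Pd: "P div k < c" "Q div k < c" using PQ' by (auto simp: less_mult_imp_div_less)
  have bnd: "u * k + P mod k < b * k" "v * k + Q mod k < b * k" if "u < b" "v < b" for u v
  proof -
    have "u * k + P mod k < u * k + k" using k by simp
    also have "\<dots> \<le> b * k" using that by (metis add.commute mult_Suc less_eq_Suc_le mult_le_mono1)
    finally show "u * k + P mod k < b * k" .
    have "v * k + Q mod k < v * k + k" using k by simp
    also have "\<dots> \<le> b * k" using that by (metis add.commute mult_Suc less_eq_Suc_le mult_le_mono1)
    finally show "v * k + Q mod k < b * k" .
  qed
  have "map_tensor b c k k S (\<lambda>X. X) (map_tensor a b k k R (\<lambda>X. X) A) $$ (P,Q)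
     = (\<Sum>u<b. \<Sum>v<b. map_tensor a b k k R (\<lambda>X. X) A $$ (u*k + P mod k, v*k + Q mod k)
            * S (eunit b u v) $$ (P div k, Q div k))"
    by (rule amp_index[OF PQ'])
  also have "\<dots> = (\<Sum>u<b. \<Sum>v<b. (\<Sum>i<a. \<Sum>j<a. A $$ (i*k + P mod k, j*k + Q mod k) * R (eunit a i j) $$ (u, v))
            * S (eunit b u v) $$ (P div k, Q div k))"
    by (intro sum.cong refl, subst amp_index) (use bnd k in auto)
  also have "\<dots> = (\<Sum>i<a. \<Sum>j<a. A $$ (i*k + P mod k, j*k + Q mod k) *
          (\<Sum>u<b. \<Sum>v<b. R (eunit a i j) $$ (u, v) * S (eunit b u v) $$ (P div k, Q div k)))"
    by (simp add: sum_distrib_left sum_distrib_right mult.assoc sum.swap[of _ "{..<b}" "{..<a}"]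
          sum.swap[of _ "{..<b}" "{..<a}"])
  also have "\<dots> = (\<Sum>i<a. \<Sum>j<a. A $$ (i*k + P mod k, j*k + Q mod k) * S (R (eunit a i j)) $$ (P div k, Q div k))"
    by (intro sum.cong refl arg_cong2[where f="(*)"] lin_expand[symmetric, OF S] R eunit_carrier Pd)
  also have "\<dots> = map_tensor a c k k (\<lambda>X. S (R X)) (\<lambda>X. X) A $$ (P,Q)"
    by (rule amp_index[symmetric, OF PQ'])
  finally show "map_tensor b c k k S (\<lambda>X. X) (map_tensor a b k k R (\<lambda>X. X) A) $$ (P,Q)
       = map_tensor a c k k (\<lambda>X. S (R X)) (\<lambda>X. X) A $$ (P,Q)" .
qed auto

lemma amp_id:
  assumes A: "A \<in> carrier_mat (a*k) (a*k)"
  shows "map_tensor a a k k (\<lambda>X. X) (\<lambda>X. X) A = A"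
proof (rule eq_matI)
  fix P Q assume PQ: "P < dim_row A" "Q < dim_col A"
  then have PQ': "P < a*k" "Q < a*k" using A by auto
  have k: "0 < k" using PQ' by (cases k) auto
  have Pd: "P div k < a" "Q div k < a" using PQ' by (auto simp: less_mult_imp_div_less)
  have "map_tensor a a k k (\<lambda>X. X) (\<lambda>X. X) A $$ (P,Q) =
    (\<Sum>i<a. \<Sum>j<a. A $$ (i*k + P mod k, j*k + Q mod k) * eunit a i j $$ (P div k, Q div k))"
    by (rule amp_index[OF PQ'])
  also have "\<dots> = (\<Sum>i<a. \<Sum>j<a. A $$ (i*k + P mod k, j*k + Q mod k) * (if P div k = i \<and> Q div k = j then 1 else 0))"
    by (intro sum.cong refl) (simp add: eunit_index Pd)
  also have "\<dots> = A $$ ((P div k)*k + P mod k, (Q div k)*k + Q mod k)"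
    by (rule sum_collapse2[OF Pd])
  also have "\<dots> = A $$ (P,Q)" by simp
  finally show "map_tensor a a k k (\<lambda>X. X) (\<lambda>X. X) A $$ (P,Q) = A $$ (P,Q)" .
qed (use A in auto)

lemma sum_lessThan_plus: fixes n m :: nat and g :: "nat \<Rightarrow> 'a::comm_monoid_add" shows "(\<Sum>x<n+m. g x) = (\<Sum>x<n. g x) + (\<Sum>y<m. g (n+y))"
  by (induction m) (simp_all add: add.assoc)

lemma sum_prod_split: fixes c m :: nat and g :: "nat \<Rightarrow> 'a::comm_monoid_add" shows "(\<Sum>P<c*m. g P) = (\<Sum>p<c. \<Sum>y<m. g (p*m + y))"
proof (induction c)
  case (Suc c)
  have "(\<Sum>P<Suc c * m. g P) = (\<Sum>P<c*m + m. g P)" by (simp add: add.commute)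
  also have "\<dots> = (\<Sum>P<c*m. g P) + (\<Sum>y<m. g (c*m + y))" by (rule sum_lessThan_plus)
  also have "\<dots> = (\<Sum>p<Suc c. \<Sum>y<m. g (p*m + y))" using Suc.IH by (simp add: add.commute)
  finally show ?case .
qed simp

definition emb :: "nat \<Rightarrow> nat \<Rightarrow> nat \<Rightarrow> nat" where
  "emb k s P = P div k * (2*k) + s*k + P mod k"

lemma emb_props:
  assumes "s < 2" "P < c*k"
  shows "emb k s P < c*(2*k)" "emb k s P div (2*k) = P div k" "emb k s P mod (2*k) = s*k + P mod k"
proof -
  have k: "0 < k" using assms by (cases k) auto
  have r: "s*k + P mod k < 2*k"
  proof -
    have "s = 0 \<or> s = 1" using assms(1) by auto
    moreover have "P mod k < k" using k by simp
    ultimately show ?thesis by auto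
  qed
  have eq: "emb k s P = P div k * (2*k) + (s*k + P mod k)" unfolding emb_def by simp
  show "emb k s P div (2*k) = P div k" unfolding eq using r by simp
  show "emb k s P mod (2*k) = s*k + P mod k" unfolding eq using r by simp
  have "P div k < c" using assms(2) by (simp add: less_mult_imp_div_less)
  then have "P div k * (2*k) + 2*k \<le> c * (2*k)"
    by (metis Suc_leI add.commute mult_Suc mult_le_mono1)
  then show "emb k s P < c*(2*k)" unfolding eq using r by linarith
qed

lemma emb_block: "s < 2 \<Longrightarrow> r < k \<Longrightarrow> emb k s (p*k + r) = p*(2*k) + s*k + r"
  unfolding emb_def by simp

lemma esplit:
  assumes k: "0 < k"
  shows "(\<Sum>P<c*(2*k). g P) = (\<Sum>P'<c*k. g (emb k 0 P')) + (\<Sum>P'<c*k. g (emb k 1 P'))"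
proof -
  have "(\<Sum>P<c*(2*k). g P) = (\<Sum>p<c. \<Sum>y<k+k. g (p*(2*k) + y))"
    by (simp add: sum_prod_split mult_2)
  also have "\<dots> = (\<Sum>p<c. (\<Sum>r<k. g (p*(2*k) + r)) + (\<Sum>r<k. g (p*(2*k) + (k + r))))"
    by (simp add: sum_lessThan_plus)
  also have "\<dots> = (\<Sum>p<c. \<Sum>r<k. g (emb k 0 (p*k + r))) + (\<Sum>p<c. \<Sum>r<k. g (emb k 1 (p*k + r)))"
    by (simp add: sum.distrib emb_block add.assoc)
  also have "\<dots> = (\<Sum>P'<c*k. g (emb k 0 P')) + (\<Sum>P'<c*k. g (emb k 1 P'))"
    by (simp add: sum_prod_split)
  finally show ?thesis .
qed

lemma qform:
  assumes N: "N \<in> carrier_mat (c*(2*k)) (c*(2*k))" and v: "dim_vec v = c*(2*k)" and k: "0 < k"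
  shows "(\<Sum>P<c*(2*k). cnj (v $ P) * (N *\<^sub>v v) $ P) =
    (\<Sum>s<2. \<Sum>t<2. \<Sum>P'<c*k. \<Sum>Q'<c*k.
        cnj (v $ emb k s P') * N $$ (emb k s P', emb k t Q') * v $ emb k t Q')"
proof -
  have Nv: "(N *\<^sub>v v) $ P = (\<Sum>Q<c*(2*k). N $$ (P,Q) * v $ Q)" if "P < c*(2*k)" for P
    using mv_index[of P N v] N v that by simp
  have "(\<Sum>P<c*(2*k). cnj (v $ P) * (N *\<^sub>v v) $ P) =
      (\<Sum>P<c*(2*k). \<Sum>Q<c*(2*k). cnj (v $ P) * N $$ (P,Q) * v $ Q)"
    by (intro sum.cong refl) (simp add: Nv sum_distrib_left mult.assoc)
  also have "\<dots> = (\<Sum>s<2. \<Sum>P'<c*k. \<Sum>t<2. \<Sum>Q'<c*k.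
        cnj (v $ emb k s P') * N $$ (emb k s P', emb k t Q') * v $ emb k t Q')"
    by (simp only: esplit[OF k]) (simp add: numeral_2_eq_2)
  also have "\<dots> = (\<Sum>s<2. \<Sum>t<2. \<Sum>P'<c*k. \<Sum>Q'<c*k.
        cnj (v $ emb k s P') * N $$ (emb k s P', emb k t Q') * v $ emb k t Q')"
    by (rule sum.cong[OF refl]) (rule sum.swap)
  finally show ?thesis .
qed

lemma delta_sum2:
  fixes x y :: "nat \<Rightarrow> complex"
  shows "(\<Sum>P<n. \<Sum>Q<n. x P * (if P = Q then 1 else 0) * y Q) = (\<Sum>P<n. x P * y P)"
proof -
  have "\<And>P Q. x P * (if P = Q then 1 else 0) * y Q = (if P = Q then x P * y Q else 0)" by simp
  then show ?thesis by (simp add: sum.delta)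
qed

definition vv :: "nat \<Rightarrow> nat \<Rightarrow> (nat \<Rightarrow> complex) \<Rightarrow> (nat \<Rightarrow> complex) \<Rightarrow> complex vec" where
  "vv c k x y = vec (c*(2*k)) (\<lambda>P. if P mod (2*k) < k then x (P div (2*k) * k + P mod (2*k))
        else y (P div (2*k) * k + (P mod (2*k) - k)))"

lemma vv_props:
  assumes "P < c*k"
  shows "vv c k x y $ emb k 0 P = x P" "vv c k x y $ emb k 1 P = y P"
proof -
  have k: "0 < k" using assms by (cases k) auto
  have m: "P mod k < k" using k by simp
  have e0: "emb k 0 P < c*(2*k)" "emb k 0 P div (2*k) = P div k" "emb k 0 P mod (2*k) = P mod k"
    using emb_props[of 0 P c k] assms by auto
  have e1: "emb k 1 P < c*(2*k)" "emb k 1 P div (2*k) = P div k" "emb k 1 P mod (2*k) = k + P mod k"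
    using emb_props[of 1 P c k] assms by auto
  show "vv c k x y $ emb k 0 P = x P" unfolding vv_def using e0 m by simp
  show "vv c k x y $ emb k 1 P = y P" unfolding vv_def using e1 m by simp
qed

lemma dim_vv[simp]: "dim_vec (vv c k x y) = c*(2*k)" unfolding vv_def by simp

lemma psd_form:
  assumes "psd n N" "dim_vec v = n"
  shows "Im (\<Sum>P<n. cnj (v $ P) * (N *\<^sub>v v) $ P) = 0" "Re (\<Sum>P<n. cnj (v $ P) * (N *\<^sub>v v) $ P) \<ge> 0"
  using assms unfolding psd_def Let_def by auto

lemma block_form:
  assumes k: "0 < k" and N: "N \<in> carrier_mat (c*(2*k)) (c*(2*k))"
    and B: "\<And>s t P Q. s < 2 \<Longrightarrow> t < 2 \<Longrightarrow> P < c*k \<Longrightarrow> Q < c*k \<Longrightarrow> N $$ (emb k s P, emb k t Q) = B s t P Q"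
  shows "(\<Sum>P<c*(2*k). cnj (vv c k x y $ P) * (N *\<^sub>v vv c k x y) $ P) =
     (\<Sum>P<c*k. \<Sum>Q<c*k. cnj (x P) * B 0 0 P Q * x Q) + (\<Sum>P<c*k. \<Sum>Q<c*k. cnj (x P) * B 0 1 P Q * y Q)
   + (\<Sum>P<c*k. \<Sum>Q<c*k. cnj (y P) * B 1 0 P Q * x Q) + (\<Sum>P<c*k. \<Sum>Q<c*k. cnj (y P) * B 1 1 P Q * y Q)"
proof -
  have "(\<Sum>P<c*(2*k). cnj (vv c k x y $ P) * (N *\<^sub>v vv c k x y) $ P) =
    (\<Sum>s<2. \<Sum>t<2. \<Sum>P'<c*k. \<Sum>Q'<c*k.
        cnj (vv c k x y $ emb k s P') * N $$ (emb k s P', emb k t Q') * vv c k x y $ emb k t Q')"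
    by (rule qform[OF N _ k]) simp
  also have "\<dots> = (\<Sum>s<2. \<Sum>t<2. \<Sum>P'<c*k. \<Sum>Q'<c*k.
        cnj ((if s = 0 then x else y) P') * B s t P' Q' * (if t = 0 then x else y) Q')"
  proof (intro sum.cong refl)
    fix s t P Q :: nat assume st: "s \<in> {..<2}" "t \<in> {..<2}" and PQ: "P \<in> {..<c*k}" "Q \<in> {..<c*k}"
    have vs: "vv c k x y $ emb k s' R = (if s' = 0 then x else y) R" if "s' < 2" "R < c*k" for s' R
    proof -
      have "s' = 0 \<or> s' = 1" using that by auto
      then show ?thesis using that by (elim disjE) (simp_all add: vv_props vv_props(2)[unfolded One_nat_def])
    qed
    show "cnj (vv c k x y $ emb k s P) * N $$ (emb k s P, emb k t Q) * vv c k x y $ emb k t Q =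
        cnj ((if s = 0 then x else y) P) * B s t P Q * (if t = 0 then x else y) Q"
      using st PQ by (simp add: vs B)
  qed
  also have "\<dots> = (\<Sum>P<c*k. \<Sum>Q<c*k. cnj (x P) * B 0 0 P Q * x Q) + (\<Sum>P<c*k. \<Sum>Q<c*k. cnj (x P) * B 0 1 P Q * y Q)
   + ((\<Sum>P<c*k. \<Sum>Q<c*k. cnj (y P) * B 1 0 P Q * x Q) + (\<Sum>P<c*k. \<Sum>Q<c*k. cnj (y P) * B 1 1 P Q * y Q))"
    by (simp add: numeral_2_eq_2)
  finally show ?thesis by (simp add: add.assoc)
qed

lemma psd_block_contr:
  assumes k: "0 < k" and N: "psd (b*(2*k)) N" and G: "G \<in> carrier_mat (b*k) (b*k)"
    and d0: "\<And>P Q. P < b*k \<Longrightarrow> Q < b*k \<Longrightarrow> N $$ (emb k 0 P, emb k 0 Q) = (if P = Q then 1 else 0)"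
    and d1: "\<And>P Q. P < b*k \<Longrightarrow> Q < b*k \<Longrightarrow> N $$ (emb k 1 P, emb k 1 Q) = (if P = Q then 1 else 0)"
    and off: "\<And>P Q. P < b*k \<Longrightarrow> Q < b*k \<Longrightarrow> N $$ (emb k 0 P, emb k 1 Q) = G $$ (P,Q)"
  shows "opnorm G \<le> 1"
proof -
  let ?n = "b*k"
  have Nc: "N \<in> carrier_mat (b*(2*k)) (b*(2*k))" using N unfolding psd_def by auto
  define B where "B s t P Q = (if s = t then (if P = Q then 1 else 0) else if s = 0 then G $$ (P,Q)
      else N $$ (emb k 1 P, emb k 0 Q))" for s t P Q :: nat
  have Bp: "N $$ (emb k s P, emb k t Q) = B s t P Q" if "s < 2" "t < 2" "P < ?n" "Q < ?n" for s t P Q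
    using that d0 d1 off unfolding B_def by (auto simp: less_2_cases_iff)
  define w where "w x = (\<Sum>P<?n. \<Sum>Q<?n. cnj (x P) * N $$ (emb k 1 P, emb k 0 Q) * x Q)" for x :: "nat \<Rightarrow> complex"
  define Gy where "Gy y = (\<lambda>P. \<Sum>Q<?n. G $$ (P,Q) * y Q)" for y :: "nat \<Rightarrow> complex"
  have form: "(\<Sum>P<b*(2*k). cnj (vv b k x (\<lambda>i. l * y i) $ P) * (N *\<^sub>v vv b k x (\<lambda>i. l * y i)) $ P)
     = ip ?n x x + l * ip ?n x (Gy y) + cnj l * (\<Sum>P<?n. \<Sum>Q<?n. cnj (y P) * N $$ (emb k 1 P, emb k 0 Q) * x Q)
       + cnj l * l * ip ?n y y" for x y l
  proof -
    have "(\<Sum>P<b*(2*k). cnj (vv b k x (\<lambda>i. l * y i) $ P) * (N *\<^sub>v vv b k x (\<lambda>i. l * y i)) $ P)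
      = (\<Sum>P<?n. \<Sum>Q<?n. cnj (x P) * B 0 0 P Q * x Q) + (\<Sum>P<?n. \<Sum>Q<?n. cnj (x P) * B 0 1 P Q * (l * y Q))
      + (\<Sum>P<?n. \<Sum>Q<?n. cnj (l * y P) * B 1 0 P Q * x Q) + (\<Sum>P<?n. \<Sum>Q<?n. cnj (l * y P) * B 1 1 P Q * (l * y Q))"
      by (rule block_form[OF k Nc Bp])
    also have "(\<Sum>P<?n. \<Sum>Q<?n. cnj (x P) * B 0 0 P Q * x Q) = ip ?n x x"
      unfolding B_def ip_def by (simp add: delta_sum2)
    also have "(\<Sum>P<?n. \<Sum>Q<?n. cnj (x P) * B 0 1 P Q * (l * y Q)) = l * ip ?n x (Gy y)"
      unfolding B_def ip_def Gy_def by (simp add: sum_distrib_left mult_ac)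
    also have "(\<Sum>P<?n. \<Sum>Q<?n. cnj (l * y P) * B 1 0 P Q * x Q) =
        cnj l * (\<Sum>P<?n. \<Sum>Q<?n. cnj (y P) * N $$ (emb k 1 P, emb k 0 Q) * x Q)"
      unfolding B_def by (simp add: sum_distrib_left mult_ac)
    also have "(\<Sum>P<?n. \<Sum>Q<?n. cnj (l * y P) * B 1 1 P Q * (l * y Q)) = cnj l * l * ip ?n y y"
    proof -
      have "(\<Sum>P<?n. \<Sum>Q<?n. cnj (l * y P) * B 1 1 P Q * (l * y Q))
          = (\<Sum>P<?n. \<Sum>Q<?n. cnj (l * y P) * (if P = Q then 1 else 0) * (l * y Q))"
        unfolding B_def by simp
      also have "\<dots> = (\<Sum>P<?n. cnj (l * y P) * (l * y P))" by (rule delta_sum2)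
      also have "\<dots> = cnj l * l * ip ?n y y" unfolding ip_def by (simp add: sum_distrib_left mult_ac)
      finally show ?thesis .
    qed
    finally show ?thesis .
  qed
  show ?thesis
  proof (rule opnorm_le'[of 1])
    fix yv :: "complex vec" assume dy: "dim_vec yv = dim_col G"
    then have dy': "dim_vec yv = ?n" using G by simp
    define y where "y = (\<lambda>i. yv $ i)"
    define x where "x = Gy y"
    define z where "z = ip ?n x (Gy y)"
    define ww where "ww = (\<Sum>P<?n. \<Sum>Q<?n. cnj (y P) * N $$ (emb k 1 P, emb k 0 Q) * x Q)"
    have fx: "ip ?n x x = complex_of_real ((fn ?n x)^2)" "ip ?n y y = complex_of_real ((fn ?n y)^2)"
      by (simp_all add: ip_self)
    have e1: "(\<Sum>P<b*(2*k). cnj (vv b k x (\<lambda>i. 1 * y i) $ P) * (N *\<^sub>v vv b k x (\<lambda>i. 1 * y i)) $ P)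
       = ip ?n x x + 1 * z + cnj 1 * ww + cnj 1 * 1 * ip ?n y y" unfolding z_def ww_def by (rule form)
    have e2: "(\<Sum>P<b*(2*k). cnj (vv b k x (\<lambda>i. \<i> * y i) $ P) * (N *\<^sub>v vv b k x (\<lambda>i. \<i> * y i)) $ P)
       = ip ?n x x + \<i> * z + cnj \<i> * ww + cnj \<i> * \<i> * ip ?n y y" unfolding z_def ww_def by (rule form)
    have e3: "(\<Sum>P<b*(2*k). cnj (vv b k x (\<lambda>i. (-1) * y i) $ P) * (N *\<^sub>v vv b k x (\<lambda>i. (-1) * y i)) $ P)
       = ip ?n x x + (-1) * z + cnj (-1) * ww + cnj (-1) * (-1) * ip ?n y y" unfolding z_def ww_def by (rule form)
    have q1: "Im (ip ?n x x + 1 * z + cnj 1 * ww + cnj 1 * 1 * ip ?n y y) = 0"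
      using psd_form(1)[OF N dim_vv[of b k x "\<lambda>i. 1 * y i"]] unfolding e1 .
    have q2: "Im (ip ?n x x + \<i> * z + cnj \<i> * ww + cnj \<i> * \<i> * ip ?n y y) = 0"
      using psd_form(1)[OF N dim_vv[of b k x "\<lambda>i. \<i> * y i"]] unfolding e2 .
    have q3: "Re (ip ?n x x + (-1) * z + cnj (-1) * ww + cnj (-1) * (-1) * ip ?n y y) \<ge> 0"
      using psd_form(2)[OF N dim_vv[of b k x "\<lambda>i. (-1) * y i"]] unfolding e3 .
    have zr: "z = complex_of_real ((fn ?n x)^2)" unfolding z_def x_def by (simp add: ip_self)
    have "Im ww = 0" using q1 fx zr by simp
    moreover have "Re ww = Re z" using q2 fx zr by simp
    ultimately have "(fn ?n x)^2 + (fn ?n y)^2 - 2 * (fn ?n x)^2 \<ge> 0" using q3 fx zr by simp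
    then have "(fn ?n x)^2 \<le> (fn ?n y)^2" by simp
    then have fxy: "fn ?n x \<le> fn ?n y" by (rule power2_le_imp_le) simp
    have "vnorm (G *\<^sub>v yv) = fn ?n x"
      unfolding vnorm_mv[OF dy] x_def Gy_def y_def using G by simp
    moreover have "vnorm yv = fn ?n y" unfolding vnorm_fn y_def dy' ..
    ultimately show "vnorm (G *\<^sub>v yv) \<le> 1 * vnorm yv" using fxy by simp
  qed simp
qed

definition bmat :: "nat \<Rightarrow> nat \<Rightarrow> (nat \<Rightarrow> nat \<Rightarrow> nat \<Rightarrow> nat \<Rightarrow> complex) \<Rightarrow> complex mat" where
  "bmat c k f = mat (c*(2*k)) (c*(2*k)) (\<lambda>(P,Q). f (P mod (2*k) div k) (Q mod (2*k) div k)
      (P div (2*k) * k + P mod (2*k) mod k) (Q div (2*k) * k + Q mod (2*k) mod k))"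

lemma emb_decode:
  assumes "s < 2" "P < c*k"
  shows "emb k s P mod (2*k) div k = s" "emb k s P div (2*k) * k + emb k s P mod (2*k) mod k = P"
proof -
  have k: "0 < k" using assms by (cases k) auto
  have m: "emb k s P mod (2*k) = s*k + P mod k" using emb_props[OF assms] by simp
  have d: "emb k s P div (2*k) = P div k" using emb_props[OF assms] by simp
  show "emb k s P mod (2*k) div k = s" unfolding m using k by simp
  show "emb k s P div (2*k) * k + emb k s P mod (2*k) mod k = P" unfolding m d using k by simp
qed

lemma bmat_index:
  assumes "s < 2" "t < 2" "P < c*k" "Q < c*k"
  shows "bmat c k f $$ (emb k s P, emb k t Q) = f s t P Q"
  unfolding bmat_def using emb_props(1)[OF assms(1,3)] emb_props(1)[OF assms(2,4)]
    emb_decode[OF assms(1,3)] emb_decode[OF assms(2,4)] by simp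

lemma bmat_carrier[simp]: "bmat c k f \<in> carrier_mat (c*(2*k)) (c*(2*k))"
  unfolding bmat_def by simp

lemma qform_gen:
  assumes k: "0 < k" and N: "N \<in> carrier_mat (c*(2*k)) (c*(2*k))" and v: "dim_vec v = c*(2*k)"
    and B: "\<And>s t P Q. s < 2 \<Longrightarrow> t < 2 \<Longrightarrow> P < c*k \<Longrightarrow> Q < c*k \<Longrightarrow> N $$ (emb k s P, emb k t Q) = B s t P Q"
  defines "x \<equiv> (\<lambda>P. v $ emb k 0 P)" and "y \<equiv> (\<lambda>P. v $ emb k 1 P)"
  shows "(\<Sum>P<c*(2*k). cnj (v $ P) * (N *\<^sub>v v) $ P) =
     (\<Sum>P<c*k. \<Sum>Q<c*k. cnj (x P) * B 0 0 P Q * x Q) + (\<Sum>P<c*k. \<Sum>Q<c*k. cnj (x P) * B 0 1 P Q * y Q)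
   + (\<Sum>P<c*k. \<Sum>Q<c*k. cnj (y P) * B 1 0 P Q * x Q) + (\<Sum>P<c*k. \<Sum>Q<c*k. cnj (y P) * B 1 1 P Q * y Q)"
proof -
  have "(\<Sum>P<c*(2*k). cnj (v $ P) * (N *\<^sub>v v) $ P) =
    (\<Sum>s<2. \<Sum>t<2. \<Sum>P'<c*k. \<Sum>Q'<c*k.
        cnj (v $ emb k s P') * N $$ (emb k s P', emb k t Q') * v $ emb k t Q')"
    by (rule qform[OF N v k])
  also have "\<dots> = (\<Sum>s<2. \<Sum>t<2. \<Sum>P'<c*k. \<Sum>Q'<c*k.
        cnj (v $ emb k s P') * B s t P' Q' * v $ emb k t Q')"
    by (intro sum.cong refl) (simp add: B)
  also have "\<dots> = (\<Sum>P<c*k. \<Sum>Q<c*k. cnj (x P) * B 0 0 P Q * x Q) + (\<Sum>P<c*k. \<Sum>Q<c*k. cnj (x P) * B 0 1 P Q * y Q)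
   + ((\<Sum>P<c*k. \<Sum>Q<c*k. cnj (y P) * B 1 0 P Q * x Q) + (\<Sum>P<c*k. \<Sum>Q<c*k. cnj (y P) * B 1 1 P Q * y Q))"
    by (simp add: numeral_2_eq_2 x_def y_def)
  finally show ?thesis by (simp add: add.assoc)
qed

definition blkA :: "complex mat \<Rightarrow> nat \<Rightarrow> nat \<Rightarrow> nat \<Rightarrow> nat \<Rightarrow> complex" where
  "blkA A s t i j = (if s = t then (if i = j then 1 else 0) else if s = 0 then A $$ (i,j) else cnj (A $$ (j,i)))"

lemma psd_build:
  assumes k: "0 < k" and A: "A \<in> carrier_mat (a*k) (a*k)" and nA: "opnorm A \<le> 1"
  shows "psd (a*(2*k)) (bmat a k (blkA A))"
  unfolding psd_def Let_def
proof (intro conjI allI impI)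
  show "bmat a k (blkA A) \<in> carrier_mat (a*(2*k)) (a*(2*k))" by simp
  fix v :: "complex vec" assume v: "dim_vec v = a*(2*k)"
  let ?n = "a*k"
  define x where "x = (\<lambda>P. v $ emb k 0 P)"
  define y where "y = (\<lambda>P. v $ emb k 1 P)"
  define Ay where "Ay = (\<lambda>P. \<Sum>Q<?n. A $$ (P,Q) * y Q)"
  define z where "z = ip ?n x Ay"
  have f: "(\<Sum>P<a*(2*k). cnj (v $ P) * (bmat a k (blkA A) *\<^sub>v v) $ P) =
     (\<Sum>P<?n. \<Sum>Q<?n. cnj (x P) * blkA A 0 0 P Q * x Q) + (\<Sum>P<?n. \<Sum>Q<?n. cnj (x P) * blkA A 0 1 P Q * y Q)
   + (\<Sum>P<?n. \<Sum>Q<?n. cnj (y P) * blkA A 1 0 P Q * x Q) + (\<Sum>P<?n. \<Sum>Q<?n. cnj (y P) * blkA A 1 1 P Q * y Q)"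
    unfolding x_def y_def by (rule qform_gen[OF k bmat_carrier v bmat_index])
  have t1: "(\<Sum>P<?n. \<Sum>Q<?n. cnj (x P) * blkA A 0 0 P Q * x Q) = ip ?n x x"
    unfolding blkA_def ip_def by (simp add: delta_sum2)
  have t4: "(\<Sum>P<?n. \<Sum>Q<?n. cnj (y P) * blkA A 1 1 P Q * y Q) = ip ?n y y"
    unfolding blkA_def ip_def by (simp add: delta_sum2)
  have t2: "(\<Sum>P<?n. \<Sum>Q<?n. cnj (x P) * blkA A 0 1 P Q * y Q) = z"
    unfolding blkA_def z_def ip_def Ay_def by (simp add: sum_distrib_left mult.assoc)
  have t3: "(\<Sum>P<?n. \<Sum>Q<?n. cnj (y P) * blkA A 1 0 P Q * x Q) = cnj z"
  proof -
    have "(\<Sum>P<?n. \<Sum>Q<?n. cnj (y P) * blkA A 1 0 P Q * x Q) = (\<Sum>P<?n. \<Sum>Q<?n. cnj (y P) * cnj (A $$ (Q,P)) * x Q)"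
      unfolding blkA_def by simp
    also have "\<dots> = (\<Sum>Q<?n. \<Sum>P<?n. cnj (y P) * cnj (A $$ (Q,P)) * x Q)" by (rule sum.swap)
    also have "\<dots> = cnj z"
      unfolding z_def ip_def Ay_def by (simp add: sum_distrib_left mult_ac)
    finally show ?thesis .
  qed
  have fA: "fn ?n Ay \<le> fn ?n y"
  proof -
    define yv where "yv = vec ?n y"
    have dyv: "dim_vec yv = dim_col A" using A unfolding yv_def by simp
    have "fn ?n Ay = vnorm (A *\<^sub>v yv)"
      unfolding vnorm_mv[OF dyv] using A by (simp, intro fn_cong) (simp add: Ay_def yv_def)
    also have "\<dots> \<le> opnorm A * vnorm yv" by (rule opnorm_mv[OF dyv])
    also have "\<dots> \<le> 1 * vnorm yv" by (rule mult_right_mono[OF nA vnorm_nonneg])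
    also have "vnorm yv = fn ?n y" unfolding vnorm_fn yv_def by (simp, intro fn_cong) simp
    finally show ?thesis by simp
  qed
  have "cmod z \<le> fn ?n x * fn ?n Ay" unfolding z_def by (rule ip_cs)
  also have "\<dots> \<le> fn ?n x * fn ?n y" by (rule mult_left_mono[OF fA fn_nonneg])
  finally have cz: "cmod z \<le> fn ?n x * fn ?n y" .
  have sumeq: "(\<Sum>P<a*(2*k). cnj (v $ P) * (bmat a k (blkA A) *\<^sub>v v) $ P)
     = complex_of_real ((fn ?n x)^2 + (fn ?n y)^2 + 2 * Re z)"
    unfolding f t1 t2 t3 t4 ip_self by (simp add: complex_eq_iff)
  show "Im (\<Sum>i<a*(2*k). cnj (v $ i) * (bmat a k (blkA A) *\<^sub>v v) $ i) = 0"
    unfolding sumeq by simp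
  have "\<bar>Re z\<bar> \<le> cmod z" by (rule abs_Re_le_cmod)
  moreover have "0 \<le> (fn ?n x - fn ?n y)^2" by simp
  ultimately have "0 \<le> (fn ?n x)^2 + (fn ?n y)^2 + 2 * Re z" using cz
    by (simp add: power2_diff)
  then show "0 \<le> Re (\<Sum>i<a*(2*k). cnj (v $ i) * (bmat a k (blkA A) *\<^sub>v v) $ i)"
    unfolding sumeq by simp
qed

lemma lin_unital_sum:
  assumes E: "lin_map a b E" and u: "E (1\<^sub>m a) = 1\<^sub>m b" and pq: "p < b" "q < b"
  shows "(\<Sum>i<a. E (eunit a i i) $$ (p,q)) = (if p = q then 1 else 0)"
proof -
  have "(if p = q then 1 else 0) = E (1\<^sub>m a) $$ (p,q)" using u pq by simp
  also have "\<dots> = (\<Sum>i<a. \<Sum>j<a. (1\<^sub>m a) $$ (i,j) * E (eunit a i j) $$ (p,q))"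
    by (rule lin_expand[OF E one_carrier_mat pq])
  also have "\<dots> = (\<Sum>i<a. \<Sum>j<a. (if i = j then E (eunit a i j) $$ (p,q) else 0))"
    by (intro sum.cong refl) simp
  also have "\<dots> = (\<Sum>i<a. E (eunit a i i) $$ (p,q))" by (simp add: sum.delta)
  finally show ?thesis by simp
qed

lemma idx_inj: fixes r k r' i j :: nat shows "r < k \<Longrightarrow> r' < k \<Longrightarrow> (i*k + r = j*k + r') \<longleftrightarrow> (i = j \<and> r = r')"
proof
  assume rk: "r < k" "r' < k" and eq: "i*k + r = j*k + r'"
  have "(i*k + r) div k = i" "(j*k + r') div k = j" "(i*k + r) mod k = r" "(j*k + r') mod k = r'"
    using rk by auto
  then show "i = j \<and> r = r'" using eq by metis
qed auto

lemma channel_contr: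
  assumes E: "channel a b E" and k: "0 < k" and A: "A \<in> carrier_mat (a*k) (a*k)" and nA: "opnorm A \<le> 1"
  shows "opnorm (map_tensor a b k k E (\<lambda>X. X) A) \<le> 1"
proof -
  have Elin: "lin_map a b E" and cp: "completely_positive a b E" and u: "E (1\<^sub>m a) = 1\<^sub>m b"
    using E unfolding channel_def by auto
  let ?M = "bmat a k (blkA A)"
  let ?N = "map_tensor a b (2*k) (2*k) E (\<lambda>X. X) ?M"
  have psdM: "psd (a*(2*k)) ?M" by (rule psd_build[OF k A nA])
  have psdN: "psd (b*(2*k)) ?N" using cp psdM k unfolding completely_positive_def by auto
  have Nval: "?N $$ (emb k s P, emb k t Q) =
      (\<Sum>i<a. \<Sum>j<a. blkA A s t (i*k + P mod k) (j*k + Q mod k) * E (eunit a i j) $$ (P div k, Q div k))"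
    if st: "s < 2" "t < 2" and PQ: "P < b*k" "Q < b*k" for s t P Q
  proof -
    have "?N $$ (emb k s P, emb k t Q) = (\<Sum>i<a. \<Sum>j<a.
        ?M $$ (i*(2*k) + emb k s P mod (2*k), j*(2*k) + emb k t Q mod (2*k))
          * E (eunit a i j) $$ (emb k s P div (2*k), emb k t Q div (2*k)))"
      by (rule amp_index) (use emb_props(1)[OF st(1) PQ(1)] emb_props(1)[OF st(2) PQ(2)] in auto)
    also have "\<dots> = (\<Sum>i<a. \<Sum>j<a. ?M $$ (emb k s (i*k + P mod k), emb k t (j*k + Q mod k))
          * E (eunit a i j) $$ (P div k, Q div k))"
      using emb_props[OF st(1) PQ(1)] emb_props[OF st(2) PQ(2)] emb_block[OF st(1)] emb_block[OF st(2)] k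
      by (simp add: add.assoc)
    also have "\<dots> = (\<Sum>i<a. \<Sum>j<a. blkA A s t (i*k + P mod k) (j*k + Q mod k) * E (eunit a i j) $$ (P div k, Q div k))"
    proof (intro sum.cong refl arg_cong2[where f="(*)"] bmat_index st)
      fix i assume "i \<in> {..<a}"
      then have "i*k + k \<le> a*k" by (metis Suc_leI add.commute lessThan_iff mult_Suc mult_le_mono1)
      then show "i*k + P mod k < a*k" using k by (meson add_strict_left_mono mod_less_divisor order_less_le_trans)
    next
      fix j assume "j \<in> {..<a}"
      then have "j*k + k \<le> a*k" by (metis Suc_leI add.commute lessThan_iff mult_Suc mult_le_mono1)
      then show "j*k + Q mod k < a*k" using k by (meson add_strict_left_mono mod_less_divisor order_less_le_trans)
    qed
    finally show ?thesis .
  qed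
  have Pd: "P div k < b" if "P < b*k" for P using that by (simp add: less_mult_imp_div_less)
  have diag: "?N $$ (emb k s P, emb k s Q) = (if P = Q then 1 else 0)"
    if s: "s < 2" and PQ: "P < b*k" "Q < b*k" for s P Q
  proof -
    have mk: "P mod k < k" "Q mod k < k" using k by auto
    have "?N $$ (emb k s P, emb k s Q) =
      (\<Sum>i<a. \<Sum>j<a. (if i = j \<and> P mod k = Q mod k then 1 else 0) * E (eunit a i j) $$ (P div k, Q div k))"
      unfolding Nval[OF s s PQ] blkA_def using idx_inj[OF mk] by simp
    also have "\<dots> = (\<Sum>i<a. \<Sum>j<a. if P mod k = Q mod k then (if i = j then E (eunit a i j) $$ (P div k, Q div k) else 0) else 0)"
      by (intro sum.cong refl) simp
    also have "\<dots> = (if P mod k = Q mod k then (\<Sum>i<a. E (eunit a i i) $$ (P div k, Q div k)) else 0)"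
      by (cases "P mod k = Q mod k") (simp_all add: sum.delta sum.delta')
    also have "\<dots> = (if P mod k = Q mod k \<and> P div k = Q div k then 1 else 0)"
      using lin_unital_sum[OF Elin u Pd[OF PQ(1)] Pd[OF PQ(2)]] by auto
    also have "\<dots> = (if P = Q then 1 else 0)" by (metis div_mult_mod_eq)
    finally show ?thesis .
  qed
  show ?thesis
  proof (rule psd_block_contr[OF k psdN map_tensor_carrier])
    fix P Q assume PQ: "P < b*k" "Q < b*k"
    show "?N $$ (emb k 0 P, emb k 0 Q) = (if P = Q then 1 else 0)" using diag[of 0] PQ by simp
    show "?N $$ (emb k 1 P, emb k 1 Q) = (if P = Q then 1 else 0)" using diag[of 1] PQ by simp
    show "?N $$ (emb k 0 P, emb k 1 Q) = map_tensor a b k k E (\<lambda>X. X) A $$ (P, Q)"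
    proof -
      have "?N $$ (emb k 0 P, emb k 1 Q) =
        (\<Sum>i<a. \<Sum>j<a. blkA A 0 1 (i*k + P mod k) (j*k + Q mod k) * E (eunit a i j) $$ (P div k, Q div k))"
        by (rule Nval) (use PQ in auto)
      also have "\<dots> = map_tensor a b k k E (\<lambda>X. X) A $$ (P, Q)"
        unfolding amp_index[OF PQ] blkA_def by simp
      finally show ?thesis .
    qed
  qed
qed

lemma idx_bound: fixes i k a m :: nat shows "i < a \<Longrightarrow> r < m \<Longrightarrow> i*m + r < a*m"
proof -
  assume "i < a" "r < m"
  then have "i*m + m \<le> a*m" by (metis Suc_leI add.commute mult_Suc mult_le_mono1)
  then show ?thesis using \<open>r < m\<close> by linarith
qed

lemma idx_div_mod: fixes i r m :: nat shows "r < m \<Longrightarrow> (i*m + r) div m = i" "r < m \<Longrightarrow> (i*m + r) mod m = r"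
  by auto

lemma map_tensor_lin: "lin_map (a1*a2) (b1*b2) (map_tensor a1 b1 a2 b2 S R)"
  unfolding lin_map_def
proof (intro conjI ballI allI)
  fix A B :: "complex mat" assume A: "A \<in> carrier_mat (a1*a2) (a1*a2)" and B: "B \<in> carrier_mat (a1*a2) (a1*a2)"
  show "map_tensor a1 b1 a2 b2 S R (A + B) = map_tensor a1 b1 a2 b2 S R A + map_tensor a1 b1 a2 b2 S R B"
  proof (rule eq_matI)
    fix p q assume "p < dim_row (map_tensor a1 b1 a2 b2 S R A + map_tensor a1 b1 a2 b2 S R B)"
      "q < dim_col (map_tensor a1 b1 a2 b2 S R A + map_tensor a1 b1 a2 b2 S R B)"
    then have pq: "p < b1*b2" "q < b1*b2" by auto
    show "map_tensor a1 b1 a2 b2 S R (A + B) $$ (p,q) = (map_tensor a1 b1 a2 b2 S R A + map_tensor a1 b1 a2 b2 S R B) $$ (p,q)"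
      unfolding map_tensor_def using pq A B
      by (simp add: idx_bound sum.distrib[symmetric] distrib_right)
  qed auto
next
  fix A :: "complex mat" and c assume A: "A \<in> carrier_mat (a1*a2) (a1*a2)"
  show "map_tensor a1 b1 a2 b2 S R (c \<cdot>\<^sub>m A) = c \<cdot>\<^sub>m map_tensor a1 b1 a2 b2 S R A"
  proof (rule eq_matI)
    fix p q assume "p < dim_row (c \<cdot>\<^sub>m map_tensor a1 b1 a2 b2 S R A)" "q < dim_col (c \<cdot>\<^sub>m map_tensor a1 b1 a2 b2 S R A)"
    then have pq: "p < b1*b2" "q < b1*b2" by auto
    show "map_tensor a1 b1 a2 b2 S R (c \<cdot>\<^sub>m A) $$ (p,q) = (c \<cdot>\<^sub>m map_tensor a1 b1 a2 b2 S R A) $$ (p,q)"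
      unfolding map_tensor_def using pq A
      by (simp add: idx_bound sum_distrib_left mult.assoc)
  qed auto
qed simp

lemma map_tensor_cong:
  assumes "\<And>X. X \<in> carrier_mat a1 a1 \<Longrightarrow> S X = S' X" "\<And>X. X \<in> carrier_mat a2 a2 \<Longrightarrow> R X = R' X"
  shows "map_tensor a1 b1 a2 b2 S R A = map_tensor a1 b1 a2 b2 S' R' A"
  unfolding map_tensor_def using assms by simp

lemma map_tensor_split:
  assumes X: "X \<in> carrier_mat (a1*a2) (a1*a2)"
  shows "map_tensor a1 b1 a2 b2 L R X = map_tensor a1 b1 b2 b2 L (\<lambda>X. X) (map_tensor a1 a1 a2 b2 (\<lambda>X. X) R X)"
proof (rule eq_matI)
  fix p q assume "p < dim_row (map_tensor a1 b1 b2 b2 L (\<lambda>X. X) (map_tensor a1 a1 a2 b2 (\<lambda>X. X) R X))"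
    "q < dim_col (map_tensor a1 b1 b2 b2 L (\<lambda>X. X) (map_tensor a1 a1 a2 b2 (\<lambda>X. X) R X))"
  then have pq: "p < b1*b2" "q < b1*b2" by auto
  have b2: "0 < b2" using pq by (cases b2) auto
  have pm: "p mod b2 < b2" "q mod b2 < b2" using b2 by auto
  let ?Z = "map_tensor a1 a1 a2 b2 (\<lambda>X. X) R X"
  have Zv: "?Z $$ (i*b2 + p mod b2, j*b2 + q mod b2) =
      (\<Sum>k<a2. \<Sum>l<a2. X $$ (i*a2 + k, j*a2 + l) * R (eunit a2 k l) $$ (p mod b2, q mod b2))"
    if ij: "i < a1" "j < a1" for i j
  proof -
    have "?Z $$ (i*b2 + p mod b2, j*b2 + q mod b2) =
      (\<Sum>i2<a1. \<Sum>j2<a1. \<Sum>k<a2. \<Sum>l<a2. X $$ (i2*a2 + k, j2*a2 + l) *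
          eunit a1 i2 j2 $$ (i, j) * R (eunit a2 k l) $$ (p mod b2, q mod b2))"
      unfolding map_tensor_def using ij pm by (simp add: idx_bound idx_div_mod)
    also have "\<dots> = (\<Sum>i2<a1. \<Sum>j2<a1. (if i = i2 \<and> j = j2 then 1 else 0) * (\<Sum>k<a2. \<Sum>l<a2. X $$ (i2*a2 + k, j2*a2 + l)
          * R (eunit a2 k l) $$ (p mod b2, q mod b2)))"
      using ij by (intro sum.cong refl) (auto simp: eunit_index sum_distrib_left)
    also have "\<dots> = (\<Sum>k<a2. \<Sum>l<a2. X $$ (i*a2 + k, j*a2 + l) * R (eunit a2 k l) $$ (p mod b2, q mod b2))"
      using sum_collapse2[OF ij, of "\<lambda>i2 j2. (\<Sum>k<a2. \<Sum>l<a2. X $$ (i2*a2 + k, j2*a2 + l)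
          * R (eunit a2 k l) $$ (p mod b2, q mod b2))"] by (simp add: mult.commute)
    finally show ?thesis .
  qed
  have "map_tensor a1 b1 b2 b2 L (\<lambda>X. X) ?Z $$ (p,q) =
      (\<Sum>i<a1. \<Sum>j<a1. ?Z $$ (i*b2 + p mod b2, j*b2 + q mod b2) * L (eunit a1 i j) $$ (p div b2, q div b2))"
    by (rule amp_index[OF pq])
  also have "\<dots> = (\<Sum>i<a1. \<Sum>j<a1. \<Sum>k<a2. \<Sum>l<a2. X $$ (i*a2 + k, j*a2 + l) * L (eunit a1 i j) $$ (p div b2, q div b2)
        * R (eunit a2 k l) $$ (p mod b2, q mod b2))"
    by (intro sum.cong refl) (simp add: Zv sum_distrib_left sum_distrib_right mult_ac)
  also have "\<dots> = map_tensor a1 b1 a2 b2 L R X $$ (p,q)"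
    unfolding map_tensor_def using pq by simp
  finally show "map_tensor a1 b1 a2 b2 L R X $$ (p,q) = map_tensor a1 b1 b2 b2 L (\<lambda>X. X) ?Z $$ (p,q)" by simp
qed auto

definition cbb :: "nat \<Rightarrow> nat \<Rightarrow> (complex mat \<Rightarrow> complex mat) \<Rightarrow> real \<Rightarrow> bool" where
  "cbb a b L c \<longleftrightarrow> (\<forall>k>0. \<forall>B \<in> carrier_mat (a*k) (a*k).
      opnorm (map_tensor a b k k L (\<lambda>X. X) B) \<le> c * opnorm B)"

lemma swap4: "(\<Sum>u\<in>U. \<Sum>v\<in>V. \<Sum>i\<in>I. \<Sum>j\<in>J. f u v i j) = (\<Sum>i\<in>I. \<Sum>j\<in>J. \<Sum>u\<in>U. \<Sum>v\<in>V. f u v i j)"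
proof -
  have "(\<Sum>u\<in>U. \<Sum>v\<in>V. \<Sum>i\<in>I. \<Sum>j\<in>J. f u v i j) = (\<Sum>u\<in>U. \<Sum>i\<in>I. \<Sum>v\<in>V. \<Sum>j\<in>J. f u v i j)"
    by (rule sum.cong[OF refl]) (rule sum.swap)
  also have "\<dots> = (\<Sum>i\<in>I. \<Sum>u\<in>U. \<Sum>v\<in>V. \<Sum>j\<in>J. f u v i j)" by (rule sum.swap)
  also have "\<dots> = (\<Sum>i\<in>I. \<Sum>u\<in>U. \<Sum>j\<in>J. \<Sum>v\<in>V. f u v i j)"
    by (rule sum.cong[OF refl], rule sum.cong[OF refl]) (rule sum.swap)
  also have "\<dots> = (\<Sum>i\<in>I. \<Sum>j\<in>J. \<Sum>u\<in>U. \<Sum>v\<in>V. f u v i j)"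
    by (rule sum.cong[OF refl]) (rule sum.swap)
  finally show ?thesis .
qed

lemma sum_collapse2':
  fixes g :: "nat \<Rightarrow> nat \<Rightarrow> complex"
  assumes "r0 < k" "s0 < k"
  shows "(\<Sum>r<k. \<Sum>s<k. g r s * (if r = r0 \<and> s = s0 then 1 else 0)) = g r0 s0"
proof -
  have "(\<Sum>r<k. \<Sum>s<k. g r s * (if r = r0 \<and> s = s0 then 1 else 0))
      = (\<Sum>r<k. if r = r0 then g r s0 else 0)"
    by (intro sum.cong refl) (use assms in \<open>auto simp: if_distrib cong: if_cong\<close>)
  also have "\<dots> = g r0 s0" using assms by simp
  finally show ?thesis .
qed

lemma GL:
  assumes L: "cbb a b L c" "0 \<le> c" and m: "0 < m" and A: "A \<in> carrier_mat NA NA"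
    and ph1: "inj_on ph {..<a*m}" and ph2: "ph ` {..<a*m} \<subseteq> {..<NA}"
    and Y: "Y \<in> carrier_mat NY NY" and ps1: "inj_on ps {..<NY}" and ps2: "ps ` {..<NY} \<subseteq> {..<b*m}"
    and eq: "\<And>x y. x < NY \<Longrightarrow> y < NY \<Longrightarrow> Y $$ (x,y) =
      (\<Sum>i<a. \<Sum>j<a. A $$ (ph (i*m + ps x mod m), ph (j*m + ps y mod m)) * L (eunit a i j) $$ (ps x div m, ps y div m))"
  shows "opnorm Y \<le> c * opnorm A"
proof -
  define A' where "A' = mat (a*m) (a*m) (\<lambda>(x,y). A $$ (ph x, ph y))"
  have A'c: "A' \<in> carrier_mat (a*m) (a*m)" unfolding A'_def by simp
  have nA': "opnorm A' \<le> opnorm A"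
    by (rule opnorm_reindex[OF A'c A ph1 ph2 ph1 ph2]) (simp add: A'_def)
  define W where "W = map_tensor a b m m L (\<lambda>X. X) A'"
  have Wc: "W \<in> carrier_mat (b*m) (b*m)" unfolding W_def by simp
  have nW: "opnorm W \<le> c * opnorm A'" using L(1) m A'c unfolding cbb_def W_def by auto
  have "opnorm Y \<le> opnorm W"
  proof (rule opnorm_reindex[OF Y Wc ps1 ps2 ps1 ps2])
    fix x y assume xy: "x < NY" "y < NY"
    then have b: "ps x < b*m" "ps y < b*m" using ps2 by auto
    have mm: "ps x mod m < m" "ps y mod m < m" using m by auto
    show "Y $$ (x,y) = W $$ (ps x, ps y)"
      unfolding eq[OF xy] W_def amp_index[OF b] A'_def
      by (intro sum.cong refl) (simp add: idx_bound mm)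
  qed
  also have "\<dots> \<le> c * opnorm A'" by (rule nW)
  also have "\<dots> \<le> c * opnorm A" by (rule mult_left_mono[OF nA' L(2)])
  finally show ?thesis .
qed

lemma cbb_left:
  assumes L: "cbb d d L c" "0 \<le> c" and N: "0 < N"
  shows "cbb (d*N) (d*N) (map_tensor d d N N L (\<lambda>X. X)) c"
  unfolding cbb_def
proof (intro allI impI ballI)
  fix k :: nat and B :: "complex mat" assume k: "0 < k" and B: "B \<in> carrier_mat (d*N*k) (d*N*k)"
  let ?Y = "map_tensor (d*N) (d*N) k k (map_tensor d d N N L (\<lambda>X. X)) (\<lambda>X. X) B"
  have Nk: "0 < N*k" using N k by simp
  have ph1: "inj_on (\<lambda>x::nat. x) {..<d*(N*k)}" by simp
  have ph2: "(\<lambda>x::nat. x) ` {..<d*(N*k)} \<subseteq> {..<d*N*k}" by (simp add: mult.assoc)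
  have ps1: "inj_on (\<lambda>x::nat. x) {..<d*N*k}" by simp
  have ps2: "(\<lambda>x::nat. x) ` {..<d*N*k} \<subseteq> {..<d*(N*k)}" by (simp add: mult.assoc)
  show "opnorm ?Y \<le> c * opnorm B"
  proof (rule GL[OF L Nk B ph1 ph2 map_tensor_carrier ps1 ps2])
    fix x y assume xy: "x < d*N*k" "y < d*N*k"
    have xy': "x < (d*N)*k" "y < (d*N)*k" using xy by auto
    let ?p = "x div k" and ?q = "y div k"
    have pq: "?p < d*N" "?q < d*N" using xy' by (auto simp: less_mult_imp_div_less)
    have inner: "map_tensor d d N N L (\<lambda>X. X) (eunit (d*N) u v) $$ (?p, ?q) =
        (\<Sum>i<d. \<Sum>j<d. (if u = i*N + ?p mod N \<and> v = j*N + ?q mod N then 1 else 0) * L (eunit d i j) $$ (?p div N, ?q div N))"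
      if uv: "u < d*N" "v < d*N" for u v
      unfolding amp_index[OF pq] using N uv
      by (intro sum.cong refl) (auto simp: eunit_index idx_bound less_mult_imp_div_less)
    have pmN: "?p mod N < N" "?q mod N < N" using N by auto
    have "?Y $$ (x,y) = (\<Sum>u<d*N. \<Sum>v<d*N. B $$ (u*k + x mod k, v*k + y mod k) *
        map_tensor d d N N L (\<lambda>X. X) (eunit (d*N) u v) $$ (?p, ?q))"
      by (rule amp_index[OF xy'])
    also have "\<dots> = (\<Sum>u<d*N. \<Sum>v<d*N. \<Sum>i<d. \<Sum>j<d. (B $$ (u*k + x mod k, v*k + y mod k) *
        L (eunit d i j) $$ (?p div N, ?q div N)) * (if u = i*N + ?p mod N \<and> v = j*N + ?q mod N then 1 else 0))"
    proof (intro sum.cong refl)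
      fix u v assume uv: "u \<in> {..<d*N}" "v \<in> {..<d*N}"
      show "B $$ (u*k + x mod k, v*k + y mod k) * map_tensor d d N N L (\<lambda>X. X) (eunit (d*N) u v) $$ (?p, ?q) =
        (\<Sum>i<d. \<Sum>j<d. (B $$ (u*k + x mod k, v*k + y mod k) *
        L (eunit d i j) $$ (?p div N, ?q div N)) * (if u = i*N + ?p mod N \<and> v = j*N + ?q mod N then 1 else 0))"
        unfolding inner[of u v, OF uv[simplified]] by (simp add: sum_distrib_left mult_ac)
    qed
    also have "\<dots> = (\<Sum>i<d. \<Sum>j<d. \<Sum>u<d*N. \<Sum>v<d*N. (B $$ (u*k + x mod k, v*k + y mod k) *
        L (eunit d i j) $$ (?p div N, ?q div N)) * (if u = i*N + ?p mod N \<and> v = j*N + ?q mod N then 1 else 0))"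
      by (rule swap4)
    also have "\<dots> = (\<Sum>i<d. \<Sum>j<d. B $$ ((i*N + ?p mod N)*k + x mod k, (j*N + ?q mod N)*k + y mod k) *
        L (eunit d i j) $$ (?p div N, ?q div N))"
      by (intro sum.cong refl sum_collapse2') (auto simp: idx_bound pmN)
    also have "\<dots> = (\<Sum>i<d. \<Sum>j<d. B $$ (i*(N*k) + x mod (N*k), j*(N*k) + y mod (N*k)) *
        L (eunit d i j) $$ (x div (N*k), y div (N*k)))"
    proof -
      have e1: "x mod (N*k) = k * (x div k mod N) + x mod k" "y mod (N*k) = k * (y div k mod N) + y mod k"
        using mod_mult2_eq[of x k N] mod_mult2_eq[of y k N] by (simp_all add: mult.commute)
      have e2: "x div (N*k) = x div k div N" "y div (N*k) = y div k div N"
        using div_mult2_eq[of x k N] div_mult2_eq[of y k N] by (simp_all add: mult.commute)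
      have idx: "\<And>i a r. (i*N + a)*k + r = i*(N*k) + (k*a + r)" by (simp add: algebra_simps)
      show ?thesis by (simp only: e1 e2 idx)
    qed
    finally show "?Y $$ (x,y) = (\<Sum>i<d. \<Sum>j<d. B $$ (i*(N*k) + x mod (N*k), j*(N*k) + y mod (N*k)) *
        L (eunit d i j) $$ (x div (N*k), y div (N*k)))" .
  qed
qed

definition phm :: "nat \<Rightarrow> nat \<Rightarrow> nat \<Rightarrow> nat \<Rightarrow> nat" where
  "phm d N k z = ((z mod (d*k)) div k * N + z div (d*k)) * k + z mod k"
definition psm :: "nat \<Rightarrow> nat \<Rightarrow> nat \<Rightarrow> nat \<Rightarrow> nat" where
  "psm d N k P = (P div k mod N) * (d*k) + ((P div k div N) * k + P mod k)"

lemma phm_formula: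
  assumes "i < N" "w < d*k" "0 < k"
  shows "phm d N k (i*(d*k) + w) = (w div k * N + i) * k + w mod k"
proof -
  have "(i*(d*k) + w) mod (d*k) = w" "(i*(d*k) + w) div (d*k) = i" using idx_div_mod[OF assms(2)] by auto
  moreover have "(i*(d*k) + w) mod k = w mod k"
    by (metis mod_mult_self3 mult.assoc mult.commute)
  ultimately show ?thesis unfolding phm_def by simp
qed

lemma psm_props:
  assumes "P < d*N*k"
  shows "psm d N k P div (d*k) = P div k mod N" "psm d N k P mod (d*k) = (P div k div N) * k + P mod k"
    "(P div k div N) * k + P mod k < d*k" "P div k mod N < N"
proof -
  have k: "0 < k" using assms by (cases k) auto
  have N: "0 < N" using assms by (cases N) auto
  have "P div k < d*N" using assms by (simp add: less_mult_imp_div_less mult.commute mult.left_commute)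
  then have "P div k div N < d" by (simp add: less_mult_imp_div_less)
  then show w: "(P div k div N) * k + P mod k < d*k" using k by (simp add: idx_bound)
  show "psm d N k P div (d*k) = P div k mod N" unfolding psm_def by (rule idx_div_mod(1)[OF w])
  show "psm d N k P mod (d*k) = (P div k div N) * k + P mod k" unfolding psm_def by (rule idx_div_mod(2)[OF w])
  show "P div k mod N < N" using N by simp
qed

lemma psm_phm: assumes "z < N*(d*k)" shows "psm d N k (phm d N k z) = z"
proof -
  have k: "0 < k" using assms by (cases k) auto
  define i where "i = z div (d*k)"
  define w where "w = z mod (d*k)"
  have dk: "0 < d*k" using assms by (cases "d*k") auto
  have iw: "i < N" "w < d*k" "z = i*(d*k) + w" unfolding i_def w_def using assms dk div_mult_mod_eq[of z "d*k"]
    by (auto simp: less_mult_imp_div_less)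
  have wk: "w div k < d" using iw(2) by (simp add: less_mult_imp_div_less)
  have p: "phm d N k z = (w div k * N + i) * k + w mod k" using phm_formula[OF iw(1,2) k] iw(3) by simp
  have a: "phm d N k z div k = w div k * N + i" "phm d N k z mod k = w mod k" unfolding p using k by simp_all
  have b: "(w div k * N + i) mod N = i" "(w div k * N + i) div N = w div k" using iw(1) by simp_all
  show ?thesis unfolding psm_def a b using iw(3) by simp
qed

lemma phm_psm: assumes "P < d*N*k" shows "phm d N k (psm d N k P) = P"
proof -
  have k: "0 < k" using assms by (cases k) auto
  have e: "psm d N k P = (P div k mod N) * (d*k) + ((P div k div N) * k + P mod k)" unfolding psm_def ..
  have "phm d N k (psm d N k P) = (((P div k div N) * k + P mod k) div k * N + P div k mod N) * k
      + ((P div k div N) * k + P mod k) mod k"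
    unfolding e by (rule phm_formula) (use psm_props[OF assms] k in auto)
  also have "\<dots> = ((P div k div N) * N + P div k mod N) * k + P mod k" using k by simp
  also have "\<dots> = P" by simp
  finally show ?thesis .
qed

lemma phm_range: assumes "z < N*(d*k)" shows "phm d N k z < d*N*k"
proof -
  have k: "0 < k" using assms by (cases k) auto
  have dk: "0 < d*k" using assms by (cases "d*k") auto
  define i where "i = z div (d*k)"
  define w where "w = z mod (d*k)"
  have iw: "i < N" "w < d*k" "z = i*(d*k) + w" unfolding i_def w_def using assms dk div_mult_mod_eq[of z "d*k"]
    by (auto simp: less_mult_imp_div_less)
  have wk: "w div k < d" using iw(2) by (simp add: less_mult_imp_div_less)
  have "w div k * N + i < d*N" by (rule idx_bound[OF wk iw(1)])
  then have "(w div k * N + i) * k + w mod k < d*N*k" by (rule idx_bound) (use k in simp)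
  then show ?thesis using phm_formula[OF iw(1,2) k] iw(3) by simp
qed

lemma psm_range: assumes "P < d*N*k" shows "psm d N k P < N*(d*k)"
  unfolding psm_def by (rule idx_bound[OF psm_props(4)[OF assms] psm_props(3)[OF assms]])

lemma mid_unit:
  assumes uv: "u < d*N" "v < d*N" and pq: "p < d*N" "q < d*N"
  shows "map_tensor d d N N (\<lambda>X. X) R (eunit (d*N) u v) $$ (p,q) =
    (\<Sum>k'<N. \<Sum>l<N. R (eunit N k' l) $$ (p mod N, q mod N) * (if u = p div N * N + k' \<and> v = q div N * N + l then 1 else 0))"
proof -
  have N: "0 < N" using pq by (cases N) auto
  have pd: "p div N < d" "q div N < d" using pq by (auto simp: less_mult_imp_div_less)
  have "map_tensor d d N N (\<lambda>X. X) R (eunit (d*N) u v) $$ (p,q) =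
    (\<Sum>i<d. \<Sum>j<d. \<Sum>k'<N. \<Sum>l<N. eunit (d*N) u v $$ (i*N + k', j*N + l) * eunit d i j $$ (p div N, q div N)
        * R (eunit N k' l) $$ (p mod N, q mod N))"
    unfolding map_tensor_def using pq by simp
  also have "\<dots> = (\<Sum>i<d. \<Sum>j<d. (\<Sum>k'<N. \<Sum>l<N. eunit (d*N) u v $$ (i*N + k', j*N + l)
        * R (eunit N k' l) $$ (p mod N, q mod N)) * (if i = p div N \<and> j = q div N then 1 else 0))"
    by (intro sum.cong refl) (auto simp: eunit_index pd sum_distrib_right)
  also have "\<dots> = (\<Sum>k'<N. \<Sum>l<N. eunit (d*N) u v $$ (p div N*N + k', q div N*N + l)
        * R (eunit N k' l) $$ (p mod N, q mod N))"
    by (rule sum_collapse2'[OF pd])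
  also have "\<dots> = (\<Sum>k'<N. \<Sum>l<N. R (eunit N k' l) $$ (p mod N, q mod N) * (if u = p div N * N + k' \<and> v = q div N * N + l then 1 else 0))"
    by (intro sum.cong refl) (auto simp: eunit_index idx_bound pd)
  finally show ?thesis .
qed

lemma cbb_mid:
  assumes R: "cbb N N R c" "0 \<le> c" and d: "0 < d"
  shows "cbb (d*N) (d*N) (map_tensor d d N N (\<lambda>X. X) R) c"
  unfolding cbb_def
proof (intro allI impI ballI)
  fix k :: nat and B :: "complex mat" assume k: "0 < k" and B: "B \<in> carrier_mat (d*N*k) (d*N*k)"
  let ?Y = "map_tensor (d*N) (d*N) k k (map_tensor d d N N (\<lambda>X. X) R) (\<lambda>X. X) B"
  have dk: "0 < d*k" using d k by simp
  have ph1: "inj_on (phm d N k) {..<N*(d*k)}" by (rule inj_on_inverseI[of _ "psm d N k"]) (simp add: psm_phm)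
  have ph2: "phm d N k ` {..<N*(d*k)} \<subseteq> {..<d*N*k}" using phm_range by auto
  have ps1: "inj_on (psm d N k) {..<d*N*k}" by (rule inj_on_inverseI[of _ "phm d N k"]) (simp add: phm_psm)
  have ps2: "psm d N k ` {..<d*N*k} \<subseteq> {..<N*(d*k)}" using psm_range by auto
  show "opnorm ?Y \<le> c * opnorm B"
  proof (rule GL[OF R dk B ph1 ph2 map_tensor_carrier ps1 ps2])
    fix x y assume xy: "x < d*N*k" "y < d*N*k"
    have xy': "x < (d*N)*k" "y < (d*N)*k" using xy by auto
    let ?p = "x div k" and ?q = "y div k"
    have pq: "?p < d*N" "?q < d*N" using xy' by (auto simp: less_mult_imp_div_less)
    have pdN: "?p div N < d" "?q div N < d" using pq by (auto simp: less_mult_imp_div_less)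
    have "?Y $$ (x,y) = (\<Sum>u<d*N. \<Sum>v<d*N. B $$ (u*k + x mod k, v*k + y mod k) *
        map_tensor d d N N (\<lambda>X. X) R (eunit (d*N) u v) $$ (?p, ?q))"
      by (rule amp_index[OF xy'])
    also have "\<dots> = (\<Sum>u<d*N. \<Sum>v<d*N. \<Sum>k'<N. \<Sum>l<N. (B $$ (u*k + x mod k, v*k + y mod k) *
        R (eunit N k' l) $$ (?p mod N, ?q mod N)) * (if u = ?p div N * N + k' \<and> v = ?q div N * N + l then 1 else 0))"
    proof (intro sum.cong refl)
      fix u v assume uv: "u \<in> {..<d*N}" "v \<in> {..<d*N}"
      show "B $$ (u*k + x mod k, v*k + y mod k) * map_tensor d d N N (\<lambda>X. X) R (eunit (d*N) u v) $$ (?p, ?q) =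
        (\<Sum>k'<N. \<Sum>l<N. (B $$ (u*k + x mod k, v*k + y mod k) *
        R (eunit N k' l) $$ (?p mod N, ?q mod N)) * (if u = ?p div N * N + k' \<and> v = ?q div N * N + l then 1 else 0))"
        unfolding mid_unit[OF uv[simplified] pq] by (simp add: sum_distrib_left mult_ac)
    qed
    also have "\<dots> = (\<Sum>k'<N. \<Sum>l<N. \<Sum>u<d*N. \<Sum>v<d*N. (B $$ (u*k + x mod k, v*k + y mod k) *
        R (eunit N k' l) $$ (?p mod N, ?q mod N)) * (if u = ?p div N * N + k' \<and> v = ?q div N * N + l then 1 else 0))"
      by (rule swap4)
    also have "\<dots> = (\<Sum>k'<N. \<Sum>l<N. B $$ ((?p div N * N + k')*k + x mod k, (?q div N * N + l)*k + y mod k) *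
        R (eunit N k' l) $$ (?p mod N, ?q mod N))"
      by (intro sum.cong refl sum_collapse2') (auto simp: idx_bound pdN)
    also have "\<dots> = (\<Sum>i<N. \<Sum>j<N. B $$ (phm d N k (i*(d*k) + psm d N k x mod (d*k)),
          phm d N k (j*(d*k) + psm d N k y mod (d*k))) * R (eunit N i j) $$ (psm d N k x div (d*k), psm d N k y div (d*k)))"
    proof (intro sum.cong refl)
      fix i j assume ij: "i \<in> {..<N}" "j \<in> {..<N}"
      have fx: "phm d N k (i*(d*k) + psm d N k x mod (d*k)) = (?p div N * N + i)*k + x mod k"
        unfolding psm_props(2)[OF xy(1)] using phm_formula[of i N "(?p div N) * k + x mod k" d k] psm_props(3)[OF xy(1)] ij k
        by simp
      have fy: "phm d N k (j*(d*k) + psm d N k y mod (d*k)) = (?q div N * N + j)*k + y mod k"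
        unfolding psm_props(2)[OF xy(2)] using phm_formula[of j N "(?q div N) * k + y mod k" d k] psm_props(3)[OF xy(2)] ij k
        by simp
      show "B $$ ((?p div N * N + i)*k + x mod k, (?q div N * N + j)*k + y mod k) * R (eunit N i j) $$ (?p mod N, ?q mod N) =
        B $$ (phm d N k (i*(d*k) + psm d N k x mod (d*k)), phm d N k (j*(d*k) + psm d N k y mod (d*k)))
          * R (eunit N i j) $$ (psm d N k x div (d*k), psm d N k y div (d*k))"
        unfolding fx fy psm_props(1)[OF xy(1)] psm_props(1)[OF xy(2)] ..
    qed
    finally show "?Y $$ (x,y) = (\<Sum>i<N. \<Sum>j<N. B $$ (phm d N k (i*(d*k) + psm d N k x mod (d*k)),
          phm d N k (j*(d*k) + psm d N k y mod (d*k))) * R (eunit N i j) $$ (psm d N k x div (d*k), psm d N k y div (d*k)))" .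
  qed
qed

lemma cbb_id: "cbb a a (\<lambda>X. X) 1"
  unfolding cbb_def using amp_id by simp

lemma cbb_cong:
  assumes "\<And>X. X \<in> carrier_mat a a \<Longrightarrow> L X = L' X" "cbb a b L c"
  shows "cbb a b L' c"
  unfolding cbb_def
proof (intro allI impI ballI)
  fix k :: nat and B :: "complex mat" assume k: "0 < k" and B: "B \<in> carrier_mat (a*k) (a*k)"
  have "map_tensor a b k k L' (\<lambda>X. X) B = map_tensor a b k k L (\<lambda>X. X) B"
    by (rule map_tensor_cong) (simp_all add: assms(1))
  then show "opnorm (map_tensor a b k k L' (\<lambda>X. X) B) \<le> c * opnorm B"
    using assms(2) k B unfolding cbb_def by simp
qed

lemma cbb_comp:
  assumes S: "lin_map b c S" "cbb b c S c1" "0 \<le> c1"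
    and R: "\<And>X. X \<in> carrier_mat a a \<Longrightarrow> R X \<in> carrier_mat b b" "cbb a b R c2"
  shows "cbb a c (\<lambda>X. S (R X)) (c1 * c2)"
  unfolding cbb_def
proof (intro allI impI ballI)
  fix k :: nat and B :: "complex mat" assume k: "0 < k" and B: "B \<in> carrier_mat (a*k) (a*k)"
  have "map_tensor a c k k (\<lambda>X. S (R X)) (\<lambda>X. X) B = map_tensor b c k k S (\<lambda>X. X) (map_tensor a b k k R (\<lambda>X. X) B)"
    by (rule amp_comp[OF S(1) R(1), symmetric])
  then have "opnorm (map_tensor a c k k (\<lambda>X. S (R X)) (\<lambda>X. X) B) \<le> c1 * opnorm (map_tensor a b k k R (\<lambda>X. X) B)"
    using S(2) k unfolding cbb_def by simp
  also have "\<dots> \<le> c1 * (c2 * opnorm B)"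
    using R(2) k B unfolding cbb_def by (intro mult_left_mono S(3)) auto
  finally show "opnorm (map_tensor a c k k (\<lambda>X. S (R X)) (\<lambda>X. X) B) \<le> c1 * c2 * opnorm B" by (simp add: mult.assoc)
qed

lemma tensor_list_lin: "lin_map (d^length Ls) (d^length Ls) (tensor_list d Ls)"
proof (cases Ls)
  case Nil then show ?thesis unfolding lin_map_def by simp
next
  case (Cons L Ls') then show ?thesis using map_tensor_lin[of d "d^length Ls'" d "d^length Ls'" L "tensor_list d Ls'"] by simp
qed

lemma tensor_list_carrier: "X \<in> carrier_mat (d^length Ls) (d^length Ls) \<Longrightarrow> tensor_list d Ls X \<in> carrier_mat (d^length Ls) (d^length Ls)"
  using tensor_list_lin[of d Ls] unfolding lin_map_def by blast

lemma pl_nonneg: "(\<forall>L\<in>set Ls. 0 \<le> cf L) \<Longrightarrow> 0 \<le> prod_list (map cf Ls)"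
  for cf :: "'a \<Rightarrow> real" by (induction Ls) auto

lemma cbb_tensor_list:
  assumes d: "0 < d" and Ls: "\<And>L. L \<in> set Ls \<Longrightarrow> cbb d d L (cf L) \<and> 0 \<le> cf L"
  shows "cbb (d^length Ls) (d^length Ls) (tensor_list d Ls) (prod_list (map cf Ls))"
  using Ls
proof (induction Ls)
  case Nil
  then show ?case using cbb_id[of 1] by simp
next
  case (Cons L Ls)
  let ?N = "d^length Ls"
  have N: "0 < ?N" using d by simp
  have cL: "cbb d d L (cf L)" "0 \<le> cf L" using Cons.prems by auto
  have IH: "cbb ?N ?N (tensor_list d Ls) (prod_list (map cf Ls))" using Cons by auto
  have p0: "0 \<le> prod_list (map cf Ls)" using Cons.prems by (intro pl_nonneg) auto
  have left: "cbb (d*?N) (d*?N) (map_tensor d d ?N ?N L (\<lambda>X. X)) (cf L)" by (rule cbb_left[OF cL N])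
  have mid: "cbb (d*?N) (d*?N) (map_tensor d d ?N ?N (\<lambda>X. X) (tensor_list d Ls)) (prod_list (map cf Ls))"
    by (rule cbb_mid[OF IH p0 d])
  have comp: "cbb (d*?N) (d*?N) (\<lambda>X. map_tensor d d ?N ?N L (\<lambda>X. X) (map_tensor d d ?N ?N (\<lambda>X. X) (tensor_list d Ls) X))
      (cf L * prod_list (map cf Ls))"
    by (rule cbb_comp[OF map_tensor_lin left cL(2) _ mid]) simp
  have "cbb (d*?N) (d*?N) (map_tensor d d ?N ?N L (tensor_list d Ls)) (cf L * prod_list (map cf Ls))"
    by (rule cbb_cong[OF _ comp]) (rule map_tensor_split[symmetric])
  then show ?case by simp
qed

lemma opnorm_zero: "opnorm (0\<^sub>m n n) = 0"
proof -
  have "opnorm (0\<^sub>m n n) \<le> 0"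
  proof (rule opnorm_le)
    fix v :: "complex vec" assume dv: "dim_vec v = dim_col (0\<^sub>m n n :: complex mat)"
    show "vnorm (0\<^sub>m n n *\<^sub>v v) \<le> 0" unfolding vnorm_mv[OF dv]
      by (simp add: fn_def L2_set_def)
  qed
  then show ?thesis using opnorm_nonneg[of "0\<^sub>m n n"] by linarith
qed

lemma opnorm_smult: assumes "X \<in> carrier_mat R C" shows "opnorm (s \<cdot>\<^sub>m X) \<le> cmod s * opnorm X"
  using opnorm_sum[of "s \<cdot>\<^sub>m X" R C "{0::nat}" "\<lambda>_. X" "\<lambda>_. s"] assms by simp

definition cbset :: "nat \<Rightarrow> nat \<Rightarrow> (complex mat \<Rightarrow> complex mat) \<Rightarrow> real set" where
  "cbset a b S = {opnorm (map_tensor a b k k S (\<lambda>X. X) A) | k A.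
      k > 0 \<and> A \<in> carrier_mat (a*k) (a*k) \<and> opnorm A \<le> 1}"

lemma cb_norm_cbset: "cb_norm a b S = Sup (cbset a b S)" unfolding cb_norm_def cbset_def ..

lemma cbset_ne: "opnorm (map_tensor a b 1 1 S (\<lambda>X. X) (0\<^sub>m a a)) \<in> cbset a b S"
proof -
  have "(0\<^sub>m a a :: complex mat) \<in> carrier_mat (a*1) (a*1)" "opnorm (0\<^sub>m a a) \<le> 1" using opnorm_zero[of a] by auto
  then show ?thesis unfolding cbset_def by blast
qed

lemma cb_le:
  assumes "\<And>k A. 0 < k \<Longrightarrow> A \<in> carrier_mat (a*k) (a*k) \<Longrightarrow> opnorm A \<le> 1 \<Longrightarrow>
     opnorm (map_tensor a b k k S (\<lambda>X. X) A) \<le> K"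
  shows "cb_norm a b S \<le> K"
proof -
  have ne: "cbset a b S \<noteq> {}" using cbset_ne by blast
  show ?thesis unfolding cb_norm_cbset by (rule cSup_least[OF ne]) (use assms in \<open>auto simp: cbset_def\<close>)
qed

lemma cbb_cb:
  assumes bd: "\<And>k A. 0 < k \<Longrightarrow> A \<in> carrier_mat (a*k) (a*k) \<Longrightarrow> opnorm A \<le> 1 \<Longrightarrow>
     opnorm (map_tensor a b k k S (\<lambda>X. X) A) \<le> K"
  shows "cbb a b S (cb_norm a b S)" "0 \<le> cb_norm a b S"
proof -
  have bdd: "bdd_above (cbset a b S)" unfolding bdd_above_def
  proof (intro exI ballI)
    fix x assume "x \<in> cbset a b S"
    then obtain k A where "x = opnorm (map_tensor a b k k S (\<lambda>X. X) A)" "0 < k" "A \<in> carrier_mat (a*k) (a*k)" "opnorm A \<le> 1"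
      unfolding cbset_def by blast
    then show "x \<le> K" using bd by simp
  qed
  have up: "opnorm (map_tensor a b k k S (\<lambda>X. X) A) \<le> cb_norm a b S"
    if "0 < k" "A \<in> carrier_mat (a*k) (a*k)" "opnorm A \<le> 1" for k A
    unfolding cb_norm_cbset by (rule cSup_upper[OF _ bdd]) (use that in \<open>auto simp: cbset_def\<close>)
  show c0: "0 \<le> cb_norm a b S"
  proof -
    have "opnorm (map_tensor a b 1 1 S (\<lambda>X. X) (0\<^sub>m a a)) \<le> cb_norm a b S"
      by (rule up) (simp_all add: opnorm_zero)
    then show ?thesis using opnorm_nonneg[of "map_tensor a b 1 1 S (\<lambda>X. X) (0\<^sub>m a a)"] by linarith
  qed
  show "cbb a b S (cb_norm a b S)" unfolding cbb_def
  proof (intro allI impI ballI)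
    fix k :: nat and B :: "complex mat" assume k: "0 < k" and B: "B \<in> carrier_mat (a*k) (a*k)"
    let ?c = "cb_norm a b S" and ?t = "opnorm B"
    let ?Y = "map_tensor a b k k S (\<lambda>X. X) B"
    show "opnorm ?Y \<le> ?c * ?t"
    proof (rule field_le_epsilon)
      fix e :: real assume e: "0 < e"
      define s where "s = ?t + e / (?c + 1)"
      have s: "0 < s" unfolding s_def using e c0 opnorm_nonneg[of B] by (simp add: add_nonneg_pos)
      define B' where "B' = (1 / s) \<cdot>\<^sub>m B"
      have B': "B' \<in> carrier_mat (a*k) (a*k)" unfolding B'_def using B by simp
      have "opnorm B' \<le> cmod (1 / s) * ?t" unfolding B'_def by (rule opnorm_smult[OF B])
      also have "\<dots> = ?t / s" using s by (simp add: norm_divide)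
      also have "\<dots> \<le> 1" using s e c0 unfolding s_def by (simp add: divide_le_eq add_nonneg_pos)
      finally have nB': "opnorm B' \<le> 1" .
      have "B = complex_of_real s \<cdot>\<^sub>m B'" unfolding B'_def using s B by (intro eq_matI) auto
      moreover have "map_tensor a b k k S (\<lambda>X. X) (complex_of_real s \<cdot>\<^sub>m B') =
          complex_of_real s \<cdot>\<^sub>m map_tensor a b k k S (\<lambda>X. X) B'"
        using map_tensor_lin[of a k b k S "\<lambda>X. X"] B' unfolding lin_map_def by blast
      ultimately have eqY: "?Y = complex_of_real s \<cdot>\<^sub>m map_tensor a b k k S (\<lambda>X. X) B'" by simp
      have "opnorm ?Y \<le> cmod (complex_of_real s) * opnorm (map_tensor a b k k S (\<lambda>X. X) B')"
        unfolding eqY by (rule opnorm_smult[OF map_tensor_carrier])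
      also have "\<dots> \<le> s * ?c" using up[OF k B' nB'] s by (simp add: mult_left_mono)
      also have "\<dots> = ?t * ?c + e * (?c / (?c + 1))" unfolding s_def using c0 by (simp add: field_simps)
      also have "\<dots> \<le> ?t * ?c + e * 1" using c0 e by (intro add_left_mono mult_left_mono) auto
      finally show "opnorm ?Y \<le> ?c * ?t + e" by (simp add: mult.commute)
    qed
  qed
qed

lemma swap5: "(\<Sum>i\<in>I. \<Sum>j\<in>J. \<Sum>k\<in>K. \<Sum>l\<in>L. \<Sum>t\<in>U. f i j k l t) = (\<Sum>t\<in>U. \<Sum>i\<in>I. \<Sum>j\<in>J. \<Sum>k\<in>K. \<Sum>l\<in>L. f i j k l t)"
proof -
  have "(\<Sum>i\<in>I. \<Sum>j\<in>J. \<Sum>k\<in>K. \<Sum>l\<in>L. \<Sum>t\<in>U. f i j k l t) = (\<Sum>i\<in>I. \<Sum>j\<in>J. \<Sum>k\<in>K. \<Sum>t\<in>U. \<Sum>l\<in>L. f i j k l t)"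
    by (intro sum.cong refl) (rule sum.swap)
  also have "\<dots> = (\<Sum>i\<in>I. \<Sum>j\<in>J. \<Sum>t\<in>U. \<Sum>k\<in>K. \<Sum>l\<in>L. f i j k l t)"
    by (intro sum.cong refl) (rule sum.swap)
  also have "\<dots> = (\<Sum>i\<in>I. \<Sum>t\<in>U. \<Sum>j\<in>J. \<Sum>k\<in>K. \<Sum>l\<in>L. f i j k l t)"
    by (intro sum.cong refl) (rule sum.swap)
  also have "\<dots> = (\<Sum>t\<in>U. \<Sum>i\<in>I. \<Sum>j\<in>J. \<Sum>k\<in>K. \<Sum>l\<in>L. f i j k l t)"
    by (rule sum.swap)
  finally show ?thesis .
qed

lemma mt_lin_L:
  assumes L: "\<And>X r s. X \<in> carrier_mat a1 a1 \<Longrightarrow> r < b1 \<Longrightarrow> s < b1 \<Longrightarrow> L1 X $$ (r,s) = L2 X $$ (r,s) - L3 X $$ (r,s)"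
    and pq: "p < b1*b2" "q < b1*b2"
  shows "map_tensor a1 b1 a2 b2 L1 R A $$ (p,q) = map_tensor a1 b1 a2 b2 L2 R A $$ (p,q) - map_tensor a1 b1 a2 b2 L3 R A $$ (p,q)"
proof -
  have pd: "p div b2 < b1" "q div b2 < b1" using pq by (auto simp: less_mult_imp_div_less mult.commute)
  show ?thesis unfolding map_tensor_def using pq
    by (simp add: L pd sum_subtractf[symmetric] algebra_simps)
qed

lemma mt_lin_R:
  assumes R: "\<And>X r s. X \<in> carrier_mat a2 a2 \<Longrightarrow> r < b2 \<Longrightarrow> s < b2 \<Longrightarrow> R1 X $$ (r,s) = R2 X $$ (r,s) - R3 X $$ (r,s)"
    and pq: "p < b1*b2" "q < b1*b2"
  shows "map_tensor a1 b1 a2 b2 L R1 A $$ (p,q) = map_tensor a1 b1 a2 b2 L R2 A $$ (p,q) - map_tensor a1 b1 a2 b2 L R3 A $$ (p,q)"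
proof -
  have b2: "0 < b2" using pq by (cases b2) auto
  have pm: "p mod b2 < b2" "q mod b2 < b2" using b2 by auto
  show ?thesis unfolding map_tensor_def using pq
    by (simp add: R pm sum_subtractf[symmetric] algebra_simps)
qed

lemma mt_sum_R:
  assumes R: "\<And>X r s. X \<in> carrier_mat a2 a2 \<Longrightarrow> r < b2 \<Longrightarrow> s < b2 \<Longrightarrow> R X $$ (r,s) = (\<Sum>t\<in>I. Rs t X $$ (r,s))"
    and pq: "p < b1*b2" "q < b1*b2"
  shows "map_tensor a1 b1 a2 b2 L R A $$ (p,q) = (\<Sum>t\<in>I. map_tensor a1 b1 a2 b2 L (Rs t) A $$ (p,q))"
proof -
  have b2: "0 < b2" using pq by (cases b2) auto
  have pm: "p mod b2 < b2" "q mod b2 < b2" using b2 by auto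
  have "map_tensor a1 b1 a2 b2 L R A $$ (p,q) = (\<Sum>i<a1. \<Sum>j<a1. \<Sum>k<a2. \<Sum>l<a2. \<Sum>t\<in>I.
       A $$ (i*a2 + k, j*a2 + l) * L (eunit a1 i j) $$ (p div b2, q div b2) * Rs t (eunit a2 k l) $$ (p mod b2, q mod b2))"
    unfolding map_tensor_def using pq by (simp add: R pm sum_distrib_left)
  also have "\<dots> = (\<Sum>t\<in>I. \<Sum>i<a1. \<Sum>j<a1. \<Sum>k<a2. \<Sum>l<a2.
       A $$ (i*a2 + k, j*a2 + l) * L (eunit a1 i j) $$ (p div b2, q div b2) * Rs t (eunit a2 k l) $$ (p mod b2, q mod b2))"
    by (rule swap5)
  also have "\<dots> = (\<Sum>t\<in>I. map_tensor a1 b1 a2 b2 L (Rs t) A $$ (p,q))"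
    unfolding map_tensor_def using pq by simp
  finally show ?thesis .
qed

lemma TL_update:
  assumes L: "\<And>X r s. X \<in> carrier_mat d d \<Longrightarrow> r < d \<Longrightarrow> s < d \<Longrightarrow> L1 X $$ (r,s) = L2 X $$ (r,s) - L3 X $$ (r,s)"
  shows "i < length Ls \<Longrightarrow> p < d^length Ls \<Longrightarrow> q < d^length Ls \<Longrightarrow>
    tensor_list d (Ls[i:=L1]) Y $$ (p,q) = tensor_list d (Ls[i:=L2]) Y $$ (p,q) - tensor_list d (Ls[i:=L3]) Y $$ (p,q)"
proof (induction Ls arbitrary: i Y p q)
  case Nil then show ?case by simp
next
  case (Cons L Ls)
  show ?case
  proof (cases i)
    case 0
    then show ?thesis using Cons.prems by (simp add: mt_lin_L[OF L])
  next
    case (Suc i')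
    have i': "i' < length Ls" using Cons.prems Suc by simp
    show ?thesis using Cons.prems Suc
      by (simp, intro mt_lin_R) (use Cons.IH[OF i'] in simp_all)
  qed
qed

fun bl :: "nat \<Rightarrow> bool list set" where
  "bl 0 = {[]}"
| "bl (Suc n) = Cons True ` bl n \<union> Cons False ` bl n"

lemma bl_finite[simp]: "finite (bl n)" by (induction n) auto

lemma bl_length: "bs \<in> bl n \<Longrightarrow> length bs = n" by (induction n arbitrary: bs) auto

lemma bl_mem: "length bs = n \<Longrightarrow> bs \<in> bl n"
proof (induction n arbitrary: bs)
  case (Suc n)
  then obtain b bs' where "bs = b # bs'" "length bs' = n" by (cases bs) auto
  then show ?case using Suc.IH by (cases b) auto
qed simp

definition sel :: "(complex mat \<Rightarrow> complex mat) \<Rightarrow> bool \<Rightarrow> complex mat \<Rightarrow> complex mat" where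
  "sel T b = (if b then (\<lambda>X. T X - X) else (\<lambda>X. X))"

lemma tensor_expand:
  assumes T: "\<And>X. X \<in> carrier_mat d d \<Longrightarrow> T X \<in> carrier_mat d d"
  shows "p < d^n \<Longrightarrow> q < d^n \<Longrightarrow>
    tensor_list d (replicate n T) Y $$ (p,q) = (\<Sum>bs\<in>bl n. tensor_list d (map (sel T) bs) Y $$ (p,q))"
proof (induction n arbitrary: Y p q)
  case 0 then show ?case by simp
next
  case (Suc n)
  let ?N = "d^n"
  have pq: "p < d*?N" "q < d*?N" using Suc.prems by auto
  have Lsplit: "\<And>X r s. X \<in> carrier_mat d d \<Longrightarrow> r < d \<Longrightarrow> s < d \<Longrightarrow>
      (\<lambda>X. T X - X) X $$ (r,s) = T X $$ (r,s) - (\<lambda>X. X) X $$ (r,s)"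
    using T by auto
  have "tensor_list d (replicate (Suc n) T) Y $$ (p,q) = map_tensor d d ?N ?N T (tensor_list d (replicate n T)) Y $$ (p,q)"
    by simp
  also have "\<dots> = (\<Sum>bs\<in>bl n. map_tensor d d ?N ?N T (tensor_list d (map (sel T) bs)) Y $$ (p,q))"
    by (rule mt_sum_R[OF Suc.IH pq])
  also have "\<dots> = (\<Sum>bs\<in>bl n. map_tensor d d ?N ?N (\<lambda>X. T X - X) (tensor_list d (map (sel T) bs)) Y $$ (p,q)
       + map_tensor d d ?N ?N (\<lambda>X. X) (tensor_list d (map (sel T) bs)) Y $$ (p,q))"
    by (intro sum.cong refl) (simp add: mt_lin_L[OF Lsplit pq])
  also have "\<dots> = (\<Sum>bs\<in>bl n. tensor_list d (map (sel T) (True # bs)) Y $$ (p,q))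
       + (\<Sum>bs\<in>bl n. tensor_list d (map (sel T) (False # bs)) Y $$ (p,q))"
    by (simp add: sum.distrib bl_length sel_def cong: sum.cong)
  also have "\<dots> = (\<Sum>bs\<in>Cons True ` bl n. tensor_list d (map (sel T) bs) Y $$ (p,q))
       + (\<Sum>bs\<in>Cons False ` bl n. tensor_list d (map (sel T) bs) Y $$ (p,q))"
    by (subst sum.reindex, simp, subst sum.reindex, simp_all)
  also have "\<dots> = (\<Sum>bs\<in>bl (Suc n). tensor_list d (map (sel T) bs) Y $$ (p,q))"
    by (simp only: bl.simps, rule sum.union_disjoint[symmetric]) auto
  finally show ?case .
qed

lemma channel_id: "channel a a (\<lambda>X. X)"
  unfolding channel_def lin_map_def completely_positive_def
proof (intro conjI allI impI ballI)
  fix k :: nat and A :: "complex mat" assume "0 < k" "psd (a*k) A"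
  then have "A \<in> carrier_mat (a*k) (a*k)" unfolding psd_def by simp
  then show "psd (a*k) (map_tensor a a k k (\<lambda>X. X) (\<lambda>X. X) A)" using \<open>psd (a*k) A\<close> by (simp add: amp_id)
qed auto

definition kmap :: "(complex mat \<Rightarrow> complex mat) \<Rightarrow> nat \<Rightarrow> complex mat \<Rightarrow> complex mat" where
  "kmap T k = (if k = 0 then (\<lambda>X. X) else if k = 1 then T else (\<lambda>X. T X - X))"

lemma filter_update_len:
  "i < length xs \<Longrightarrow> length (filter P (xs[i:=v])) + (if P (xs!i) then 1 else 0) = length (filter P xs) + (if P v then 1 else 0)"
proof (induction xs arbitrary: i)
  case (Cons x xs) then show ?case by (cases i) auto
qed simp

lemma set_update_2:
  assumes "i < length ks" "v \<noteq> (2::nat)"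
  shows "2 \<in> set (ks[i:=v]) \<longleftrightarrow> (\<exists>j<length ks. j \<noteq> i \<and> ks!j = 2)"
  using assms by (auto simp: in_set_conv_nth nth_list_update)

lemma E_lin_entry:
  assumes E: "lin_map N M E" and Y: "Y \<in> carrier_mat N N" "Y1 \<in> carrier_mat N N" "Y0 \<in> carrier_mat N N"
    and eq: "\<And>a b. a < N \<Longrightarrow> b < N \<Longrightarrow> Y $$ (a,b) = Y1 $$ (a,b) - Y0 $$ (a,b)" and pq: "p < M" "q < M"
  shows "E Y $$ (p,q) = E Y1 $$ (p,q) - E Y0 $$ (p,q)"
  unfolding lin_expand[OF E Y(1) pq] lin_expand[OF E Y(2) pq] lin_expand[OF E Y(3) pq]
  by (simp add: eq sum_subtractf[symmetric] algebra_simps)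

lemma correction:
  assumes T: "channel d d T" and E: "channel (d^n) (d^m) E" and D: "channel (d^m) (d^n) D"
    and C: "corrects d m n f E D" and X: "X \<in> carrier_mat (d^m) (d^m)" and pq: "p < d^m" "q < d^m"
  shows "length ks = n \<Longrightarrow> set ks \<subseteq> {0,1,2} \<Longrightarrow> length (filter (\<lambda>k. k \<noteq> 0) ks) \<le> f \<Longrightarrow>
    E (tensor_list d (map (kmap T) ks) (D X)) $$ (p,q) = (if 2 \<in> set ks then 0 else X $$ (p,q))"
proof (induction "length (filter (\<lambda>k. k = 2) ks)" arbitrary: ks rule: less_induct)
  case less
  have Elin: "lin_map (d^n) (d^m) E" using E unfolding channel_def by simp
  have Tc: "\<And>X. X \<in> carrier_mat d d \<Longrightarrow> T X \<in> carrier_mat d d" using T unfolding channel_def lin_map_def by simp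
  have DX: "D X \<in> carrier_mat (d^n) (d^n)" using D X unfolding channel_def lin_map_def by simp
  have TLc: "tensor_list d (map (kmap T) ks') (D X) \<in> carrier_mat (d^n) (d^n)" if "length ks' = n" for ks'
    using tensor_list_carrier[of "D X" d "map (kmap T) ks'"] DX that by simp
  show ?case
  proof (cases "2 \<in> set ks")
    case False
    let ?Ts = "map (kmap T) ks"
    have ch: "\<forall>S\<in>set ?Ts. channel d d S"
    proof
      fix S assume "S \<in> set ?Ts"
      then obtain k where k: "k \<in> set ks" "S = kmap T k" by auto
      then have "k = 0 \<or> k = 1" using less.prems(2) False by auto
      then show "channel d d S" using k T channel_id unfolding kmap_def by auto
    qed
    have "{i. i < n \<and> \<not> (\<forall>A\<in>carrier_mat d d. (?Ts ! i) A = A)} \<subseteq> {i. i < length ks \<and> ks ! i \<noteq> 0}"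
      using less.prems(1) by (auto simp: kmap_def)
    then have "card {i. i < n \<and> \<not> (\<forall>A\<in>carrier_mat d d. (?Ts ! i) A = A)} \<le> card {i. i < length ks \<and> ks ! i \<noteq> 0}"
      by (intro card_mono) auto
    also have "\<dots> = length (filter (\<lambda>k. k \<noteq> 0) ks)" by (simp add: length_filter_conv_card)
    finally have cnt: "card {i. i < n \<and> \<not> (\<forall>A\<in>carrier_mat d d. (?Ts ! i) A = A)} \<le> f" using less.prems(3) by linarith
    have "E (tensor_list d ?Ts (D X)) = X"
      using C ch cnt X less.prems(1) unfolding corrects_def by auto
    then show ?thesis using False by simp
  next
    case True
    then obtain i where i: "i < length ks" "ks ! i = 2" by (auto simp: in_set_conv_nth)
    let ?ks1 = "ks[i:=1]" and ?ks0 = "ks[i:=0]"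
    have c1: "length (filter (\<lambda>k. k = 2) ?ks1) < length (filter (\<lambda>k. k = 2) ks)"
      using filter_update_len[OF i(1), of "\<lambda>k. k = 2" 1] i by simp
    have c0: "length (filter (\<lambda>k. k = 2) ?ks0) < length (filter (\<lambda>k. k = 2) ks)"
      using filter_update_len[OF i(1), of "\<lambda>k. k = 2" 0] i by simp
    have n1: "length (filter (\<lambda>k. k \<noteq> 0) ?ks1) \<le> f"
      using filter_update_len[OF i(1), of "\<lambda>k. k \<noteq> 0" 1] i less.prems(3) by simp
    have n0: "length (filter (\<lambda>k. k \<noteq> 0) ?ks0) \<le> f"
      using filter_update_len[OF i(1), of "\<lambda>k. k \<noteq> 0" 0] i less.prems(3) by simp
    have s1: "set ?ks1 \<subseteq> {0,1,2}" "set ?ks0 \<subseteq> {0,1,2}"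
      using less.prems(2) set_update_subset_insert[of ks i] by fastforce+
    have IH1: "E (tensor_list d (map (kmap T) ?ks1) (D X)) $$ (p,q) = (if 2 \<in> set ?ks1 then 0 else X $$ (p,q))"
      using less.hyps[OF c1] less.prems(1) s1(1) n1 by simp
    have IH0: "E (tensor_list d (map (kmap T) ?ks0) (D X)) $$ (p,q) = (if 2 \<in> set ?ks0 then 0 else X $$ (p,q))"
      using less.hyps[OF c0] less.prems(1) s1(2) n0 by simp
    have same: "2 \<in> set ?ks1 \<longleftrightarrow> 2 \<in> set ?ks0" using set_update_2[OF i(1)] by simp
    have m2: "map (kmap T) ks = (map (kmap T) ks)[i := (\<lambda>X. T X - X)]"
    proof -
      have "(map (kmap T) ks)[i := ((map (kmap T) ks) ! i)] = map (kmap T) ks" by (rule list_update_id)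
      moreover have "((map (kmap T) ks) ! i) = (\<lambda>X. T X - X)" using i by (simp add: kmap_def)
      ultimately show ?thesis by simp
    qed
    have m1: "map (kmap T) ?ks1 = (map (kmap T) ks)[i := T]" by (simp add: map_update kmap_def)
    have m0: "map (kmap T) ?ks0 = (map (kmap T) ks)[i := (\<lambda>X. X)]" by (simp add: map_update kmap_def)
    have Lsplit: "\<And>Z r s. Z \<in> carrier_mat d d \<Longrightarrow> r < d \<Longrightarrow> s < d \<Longrightarrow>
      (\<lambda>X. T X - X) Z $$ (r,s) = T Z $$ (r,s) - (\<lambda>X. X) Z $$ (r,s)"
      using Tc by auto
    have entry: "tensor_list d (map (kmap T) ks) (D X) $$ (a,b) =
        tensor_list d (map (kmap T) ?ks1) (D X) $$ (a,b) - tensor_list d (map (kmap T) ?ks0) (D X) $$ (a,b)"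
      if "a < d^n" "b < d^n" for a b
    proof -
      have inst: "i < length (map (kmap T) ks) \<Longrightarrow> a < d^length (map (kmap T) ks) \<Longrightarrow> b < d^length (map (kmap T) ks) \<Longrightarrow>
        tensor_list d ((map (kmap T) ks)[i:=(\<lambda>X. T X - X)]) (D X) $$ (a,b) =
        tensor_list d ((map (kmap T) ks)[i:=T]) (D X) $$ (a,b) - tensor_list d ((map (kmap T) ks)[i:=(\<lambda>X. X)]) (D X) $$ (a,b)"
        by (rule TL_update[OF Lsplit])
      have "tensor_list d ((map (kmap T) ks)[i:=(\<lambda>X. T X - X)]) (D X) $$ (a,b) =
        tensor_list d ((map (kmap T) ks)[i:=T]) (D X) $$ (a,b) - tensor_list d ((map (kmap T) ks)[i:=(\<lambda>X. X)]) (D X) $$ (a,b)"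
        using inst i that less.prems(1) by simp
      then show ?thesis unfolding m1 m0 m2[symmetric] .
    qed
    have "E (tensor_list d (map (kmap T) ks) (D X)) $$ (p,q) =
        E (tensor_list d (map (kmap T) ?ks1) (D X)) $$ (p,q) - E (tensor_list d (map (kmap T) ?ks0) (D X)) $$ (p,q)"
      by (rule E_lin_entry[OF Elin TLc TLc TLc entry pq]) (use less.prems(1) in simp_all)
    then show ?thesis using IH1 IH0 same True by simp
  qed
qed

lemma swap3: "(\<Sum>i\<in>I. \<Sum>j\<in>J. \<Sum>t\<in>U. f i j t) = (\<Sum>t\<in>U. \<Sum>i\<in>I. \<Sum>j\<in>J. f i j t)"
proof -
  have "(\<Sum>i\<in>I. \<Sum>j\<in>J. \<Sum>t\<in>U. f i j t) = (\<Sum>i\<in>I. \<Sum>t\<in>U. \<Sum>j\<in>J. f i j t)"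
    by (intro sum.cong refl) (rule sum.swap)
  also have "\<dots> = (\<Sum>t\<in>U. \<Sum>i\<in>I. \<Sum>j\<in>J. f i j t)" by (rule sum.swap)
  finally show ?thesis .
qed

definition cntT :: "bool list \<Rightarrow> nat" where "cntT bs = length (filter (\<lambda>b. b) bs)"

lemma core:
  assumes T: "channel d d T" and E: "channel (d^n) (d^m) E" and D: "channel (d^m) (d^n) D"
    and C: "corrects d m n f E D" and X: "X \<in> carrier_mat (d^m) (d^m)" and pq: "p < d^m" "q < d^m"
  shows "E (tensor_pow d T n (D X)) $$ (p,q) - X $$ (p,q) =
    (\<Sum>bs\<in>{bs\<in>bl n. f+1 \<le> cntT bs}. E (tensor_list d (map (sel T) bs) (D X)) $$ (p,q))"
proof -
  have Elin: "lin_map (d^n) (d^m) E" using E unfolding channel_def by simp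
  have Tc: "\<And>X. X \<in> carrier_mat d d \<Longrightarrow> T X \<in> carrier_mat d d" using T unfolding channel_def lin_map_def by simp
  have DX: "D X \<in> carrier_mat (d^n) (d^n)" using D X unfolding channel_def lin_map_def by simp
  have TLc: "tensor_list d Ls (D X) \<in> carrier_mat (d^n) (d^n)" if "length Ls = n" for Ls
    using tensor_list_carrier[of "D X" d Ls] DX that by simp
  let ?Y = "tensor_pow d T n (D X)"
  have Yc: "?Y \<in> carrier_mat (d^n) (d^n)" unfolding tensor_pow_def using TLc[of "replicate n T"] by simp
  let ?g = "\<lambda>bs. E (tensor_list d (map (sel T) bs) (D X)) $$ (p,q)"
  have "E ?Y $$ (p,q) = (\<Sum>a<d^n. \<Sum>b<d^n. ?Y $$ (a,b) * E (eunit (d^n) a b) $$ (p,q))"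
    by (rule lin_expand[OF Elin Yc pq])
  also have "\<dots> = (\<Sum>a<d^n. \<Sum>b<d^n. \<Sum>bs\<in>bl n. tensor_list d (map (sel T) bs) (D X) $$ (a,b) * E (eunit (d^n) a b) $$ (p,q))"
    unfolding tensor_pow_def
    by (intro sum.cong refl) (simp add: tensor_expand[OF Tc] sum_distrib_right)
  also have "\<dots> = (\<Sum>bs\<in>bl n. \<Sum>a<d^n. \<Sum>b<d^n. tensor_list d (map (sel T) bs) (D X) $$ (a,b) * E (eunit (d^n) a b) $$ (p,q))"
    by (rule swap3)
  also have "\<dots> = (\<Sum>bs\<in>bl n. ?g bs)"
    by (intro sum.cong refl lin_expand[OF Elin _ pq, symmetric] TLc) (simp add: bl_length)
  also have "\<dots> = (\<Sum>bs\<in>{bs\<in>bl n. f+1 \<le> cntT bs}. ?g bs) + (\<Sum>bs\<in>{bs\<in>bl n. \<not> f+1 \<le> cntT bs}. ?g bs)"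
  proof -
    have "(\<Sum>bs\<in>bl n. ?g bs) = (\<Sum>bs\<in>{bs\<in>bl n. f+1 \<le> cntT bs} \<union> {bs\<in>bl n. \<not> f+1 \<le> cntT bs}. ?g bs)"
      by (rule sum.cong) auto
    also have "\<dots> = (\<Sum>bs\<in>{bs\<in>bl n. f+1 \<le> cntT bs}. ?g bs) + (\<Sum>bs\<in>{bs\<in>bl n. \<not> f+1 \<le> cntT bs}. ?g bs)"
      by (rule sum.union_disjoint) auto
    finally show ?thesis .
  qed
  also have "(\<Sum>bs\<in>{bs\<in>bl n. \<not> f+1 \<le> cntT bs}. ?g bs) = (\<Sum>bs\<in>{bs\<in>bl n. \<not> f+1 \<le> cntT bs}.
      (if bs = replicate n False then X $$ (p,q) else 0))"
  proof (intro sum.cong refl)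
    fix bs assume bs: "bs \<in> {bs\<in>bl n. \<not> f+1 \<le> cntT bs}"
    let ?ks = "map (\<lambda>b. if b then 2 else 0::nat) bs"
    have len: "length bs = n" using bs bl_length by auto
    have mk: "map (kmap T) ?ks = map (sel T) bs" by (auto simp: kmap_def sel_def)
    have cnt: "length (filter (\<lambda>k. k \<noteq> 0) ?ks) \<le> f"
    proof -
      have "length (filter (\<lambda>k. k \<noteq> 0) ?ks) = cntT bs" unfolding cntT_def
        by (induction bs) auto
      then show ?thesis using bs by simp
    qed
    have sub: "set ?ks \<subseteq> {0,1,2}" by auto
    have len': "length ?ks = n" using len by simp
    have "?g bs = E (tensor_list d (map (kmap T) ?ks) (D X)) $$ (p,q)" unfolding mk ..
    also have "\<dots> = (if 2 \<in> set ?ks then 0 else X $$ (p,q))"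
      by (rule correction[OF T E D C X pq len' sub cnt])
    finally have "?g bs = (if 2 \<in> set ?ks then 0 else X $$ (p,q))" .
    also have "\<dots> = (if bs = replicate n False then X $$ (p,q) else 0)"
    proof -
      have "2 \<in> set ?ks \<longleftrightarrow> True \<in> set bs" by auto
      moreover have "True \<in> set bs \<longleftrightarrow> bs \<noteq> replicate n False"
        using len by (auto simp: replicate_length_same[symmetric] in_set_conv_nth list_eq_iff_nth_eq)
      ultimately show ?thesis by simp
    qed
    finally show "?g bs = (if bs = replicate n False then X $$ (p,q) else 0)" .
  qed
  also have "\<dots> = X $$ (p,q)"
  proof -
    have "replicate n False \<in> {bs\<in>bl n. \<not> f+1 \<le> cntT bs}"
      by (simp add: bl_mem cntT_def)
    then show ?thesis by (simp add: sum.delta')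
  qed
  finally show ?thesis by simp
qed

lemma eunit_dims[simp]: "dim_row (eunit a i j) = a" "dim_col (eunit a i j) = a"
  unfolding eunit_def by simp_all

lemma cbb_mono: "cbb a b L c \<Longrightarrow> c \<le> c' \<Longrightarrow> cbb a b L c'"
  unfolding cbb_def by (meson mult_right_mono opnorm_nonneg order_trans)

lemma cbb_channel: assumes E: "channel a b E" shows "cbb a b E 1"
proof -
  have bd: "\<And>k A. 0 < k \<Longrightarrow> A \<in> carrier_mat (a*k) (a*k) \<Longrightarrow> opnorm A \<le> 1 \<Longrightarrow>
     opnorm (map_tensor a b k k E (\<lambda>X. X) A) \<le> 1" using channel_contr[OF E] by blast
  show ?thesis by (rule cbb_mono[OF cbb_cb(1)[OF bd] cb_le[OF bd]])
qed

lemma delta_bound: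
  assumes T: "channel d d T" and k: "0 < k" and A: "A \<in> carrier_mat (d*k) (d*k)" and nA: "opnorm A \<le> 1"
  shows "opnorm (map_tensor d d k k (\<lambda>X. T X - X) (\<lambda>X. X) A) \<le> 2"
proof -
  have Tc: "\<And>X. X \<in> carrier_mat d d \<Longrightarrow> T X \<in> carrier_mat d d" using T unfolding channel_def lin_map_def by simp
  have Lsplit: "\<And>Z r s. Z \<in> carrier_mat d d \<Longrightarrow> r < d \<Longrightarrow> s < d \<Longrightarrow>
      (\<lambda>X. T X - X) Z $$ (r,s) = T Z $$ (r,s) - (\<lambda>X. X) Z $$ (r,s)" using Tc by auto
  define G where "G i = (if i = (0::nat) then map_tensor d d k k T (\<lambda>X. X) A else A)" for i
  define c where "c i = (if i = (0::nat) then 1 else -1::complex)" for i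
  have "opnorm (map_tensor d d k k (\<lambda>X. T X - X) (\<lambda>X. X) A) \<le> (\<Sum>i\<in>{0,1}. cmod (c i) * opnorm (G i))"
  proof (rule opnorm_sum[OF map_tensor_carrier])
    fix i assume "i \<in> {0::nat,1}" then show "G i \<in> carrier_mat (d*k) (d*k)" using A unfolding G_def by auto
  next
    fix x y assume xy: "x < d*k" "y < d*k"
    have "map_tensor d d k k (\<lambda>X. T X - X) (\<lambda>X. X) A $$ (x,y) =
        map_tensor d d k k T (\<lambda>X. X) A $$ (x,y) - map_tensor d d k k (\<lambda>X. X) (\<lambda>X. X) A $$ (x,y)"
      by (rule mt_lin_L[OF Lsplit xy])
    also have "\<dots> = (\<Sum>i\<in>{0,1}. c i * G i $$ (x,y))" unfolding amp_id[OF A] G_def c_def by simp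
    finally show "map_tensor d d k k (\<lambda>X. T X - X) (\<lambda>X. X) A $$ (x,y) = (\<Sum>i\<in>{0,1}. c i * G i $$ (x,y))" .
  qed simp
  also have "\<dots> = opnorm (map_tensor d d k k T (\<lambda>X. X) A) + opnorm A" unfolding G_def c_def by simp
  also have "\<dots> \<le> 1 + 1" using channel_contr[OF T k A nA] nA by simp
  finally show ?thesis by simp
qed

lemma cbb_tensor_list2:
  assumes d: "0 < d" and Ps: "\<And>P. P \<in> set Ps \<Longrightarrow> cbb d d (fst P) (snd P) \<and> 0 \<le> snd P"
  shows "cbb (d^length Ps) (d^length Ps) (tensor_list d (map fst Ps)) (prod_list (map snd Ps))"
  using Ps
proof (induction Ps)
  case Nil
  then show ?case using cbb_id[of 1] by simp
next
  case (Cons P Ps)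
  let ?N = "d^length Ps"
  have N: "0 < ?N" using d by simp
  have cL: "cbb d d (fst P) (snd P)" "0 \<le> snd P" using Cons.prems by auto
  have IH: "cbb ?N ?N (tensor_list d (map fst Ps)) (prod_list (map snd Ps))" using Cons by auto
  have p0: "0 \<le> prod_list (map snd Ps)" using Cons.prems pl_nonneg[of Ps snd] by auto
  have left: "cbb (d*?N) (d*?N) (map_tensor d d ?N ?N (fst P) (\<lambda>X. X)) (snd P)" by (rule cbb_left[OF cL N])
  have mid: "cbb (d*?N) (d*?N) (map_tensor d d ?N ?N (\<lambda>X. X) (tensor_list d (map fst Ps))) (prod_list (map snd Ps))"
    by (rule cbb_mid[OF IH p0 d])
  have comp: "cbb (d*?N) (d*?N) (\<lambda>X. map_tensor d d ?N ?N (fst P) (\<lambda>X. X) (map_tensor d d ?N ?N (\<lambda>X. X) (tensor_list d (map fst Ps)) X))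
      (snd P * prod_list (map snd Ps))"
    by (rule cbb_comp[OF map_tensor_lin left cL(2) _ mid]) simp
  have "cbb (d*?N) (d*?N) (map_tensor d d ?N ?N (fst P) (tensor_list d (map fst Ps))) (snd P * prod_list (map snd Ps))"
    by (rule cbb_cong[OF _ comp]) (rule map_tensor_split[symmetric])
  then show ?case by simp
qed

definition selp :: "(complex mat \<Rightarrow> complex mat) \<Rightarrow> real \<Rightarrow> bool \<Rightarrow> (complex mat \<Rightarrow> complex mat) \<times> real" where
  "selp T x b = (if b then ((\<lambda>X. T X - X), x) else ((\<lambda>X. X), 1))"

lemma selp_fst: "map fst (map (selp T x) bs) = map (sel T) bs"
  by (induction bs) (auto simp: selp_def sel_def)

lemma selp_snd: "prod_list (map snd (map (selp T x) bs)) = x ^ cntT bs"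
  by (induction bs) (auto simp: selp_def cntT_def)

lemma LHS_bound:
  assumes T: "channel d d T" and E: "channel (d^n) (d^m) E" and D: "channel (d^m) (d^n) D"
    and C: "corrects d m n f E D" and d: "0 < d"
  shows "cb_norm (d^m) (d^m) (\<lambda>X. E (tensor_pow d T n (D X)) - X)
     \<le> (\<Sum>bs\<in>{bs\<in>bl n. f+1 \<le> cntT bs}. cb_norm d d (\<lambda>X. T X - X) ^ cntT bs)"
proof -
  let ?x = "cb_norm d d (\<lambda>X. T X - X)"
  let ?G = "{bs\<in>bl n. f+1 \<le> cntT bs}"
  have bdD: "\<And>k A. 0 < k \<Longrightarrow> A \<in> carrier_mat (d*k) (d*k) \<Longrightarrow> opnorm A \<le> 1 \<Longrightarrow>
     opnorm (map_tensor d d k k (\<lambda>X. T X - X) (\<lambda>X. X) A) \<le> 2" using delta_bound[OF T] by blast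
  have cbD: "cbb d d (\<lambda>X. T X - X) ?x" and x0: "0 \<le> ?x" using cbb_cb[OF bdD] by auto
  have Elin: "lin_map (d^n) (d^m) E" using E unfolding channel_def by simp
  have Dc: "\<And>X. X \<in> carrier_mat (d^m) (d^m) \<Longrightarrow> D X \<in> carrier_mat (d^n) (d^n)"
    using D unfolding channel_def lin_map_def by simp
  have Ec: "\<And>X. X \<in> carrier_mat (d^n) (d^n) \<Longrightarrow> E X \<in> carrier_mat (d^m) (d^m)"
    using E unfolding channel_def lin_map_def by simp
  define Fb where "Fb bs = (\<lambda>X. E (tensor_list d (map (sel T) bs) (D X)))" for bs
  have cbF: "cbb (d^m) (d^m) (Fb bs) (1 * (?x ^ cntT bs * 1))" if bs: "bs \<in> bl n" for bs
  proof -
    have len: "length bs = n" using bs bl_length by auto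
    have TLlin: "lin_map (d^n) (d^n) (tensor_list d (map (sel T) bs))"
      using tensor_list_lin[of d "map (sel T) bs"] len by simp
    have TLc: "\<And>X. X \<in> carrier_mat (d^n) (d^n) \<Longrightarrow> tensor_list d (map (sel T) bs) X \<in> carrier_mat (d^n) (d^n)"
      using TLlin unfolding lin_map_def by simp
    have cbTL: "cbb (d^n) (d^n) (tensor_list d (map (sel T) bs)) (?x ^ cntT bs)"
    proof -
      have "cbb (d^length (map (selp T ?x) bs)) (d^length (map (selp T ?x) bs))
          (tensor_list d (map fst (map (selp T ?x) bs))) (prod_list (map snd (map (selp T ?x) bs)))"
        by (rule cbb_tensor_list2[OF d]) (auto simp: selp_def cbD x0 cbb_id)
      then show ?thesis unfolding selp_fst selp_snd using len by simp
    qed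
    have inner: "cbb (d^m) (d^n) (\<lambda>X. tensor_list d (map (sel T) bs) (D X)) (?x ^ cntT bs * 1)"
      by (rule cbb_comp[OF TLlin cbTL _ Dc cbb_channel[OF D]]) (use x0 in simp)
    show ?thesis unfolding Fb_def
      by (rule cbb_comp[OF Elin cbb_channel[OF E] _ _ inner]) (simp_all add: TLc Dc)
  qed
  show ?thesis
  proof (rule cb_le)
    fix k :: nat and A :: "complex mat" assume k: "0 < k" and A: "A \<in> carrier_mat (d^m*k) (d^m*k)" and nA: "opnorm A \<le> 1"
    let ?M = "map_tensor (d^m) (d^m) k k (\<lambda>X. E (tensor_pow d T n (D X)) - X) (\<lambda>X. X) A"
    define Gb where "Gb bs = map_tensor (d^m) (d^m) k k (Fb bs) (\<lambda>X. X) A" for bs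
    have "opnorm ?M \<le> (\<Sum>bs\<in>?G. cmod (1::complex) * opnorm (Gb bs))"
    proof (rule opnorm_sum[OF map_tensor_carrier])
      show "finite ?G" by simp
      fix bs show "Gb bs \<in> carrier_mat (d^m*k) (d^m*k)" unfolding Gb_def by simp
    next
      fix x y assume xy: "x < d^m*k" "y < d^m*k"
      have pq: "x div k < d^m" "y div k < d^m" using xy by (auto simp: less_mult_imp_div_less)
      have Fe: "(E (tensor_pow d T n (D (eunit (d^m) i j))) - eunit (d^m) i j) $$ (x div k, y div k)
          = (\<Sum>bs\<in>?G. Fb bs (eunit (d^m) i j) $$ (x div k, y div k))" for i j
        unfolding Fb_def using core[OF T E D C eunit_carrier pq] pq by simp
      have "?M $$ (x,y) = (\<Sum>i<d^m. \<Sum>j<d^m. A $$ (i*k + x mod k, j*k + y mod k) *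
          (E (tensor_pow d T n (D (eunit (d^m) i j))) - eunit (d^m) i j) $$ (x div k, y div k))"
        by (rule amp_index[OF xy])
      also have "\<dots> = (\<Sum>i<d^m. \<Sum>j<d^m. \<Sum>bs\<in>?G. A $$ (i*k + x mod k, j*k + y mod k) * Fb bs (eunit (d^m) i j) $$ (x div k, y div k))"
        by (simp add: Fe sum_distrib_left)
      also have "\<dots> = (\<Sum>bs\<in>?G. \<Sum>i<d^m. \<Sum>j<d^m. A $$ (i*k + x mod k, j*k + y mod k) * Fb bs (eunit (d^m) i j) $$ (x div k, y div k))"
        by (rule swap3)
      also have "\<dots> = (\<Sum>bs\<in>?G. 1 * Gb bs $$ (x,y))"
        unfolding Gb_def by (simp add: amp_index[OF xy])
      finally show "?M $$ (x,y) = (\<Sum>bs\<in>?G. 1 * Gb bs $$ (x,y))" .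
    qed
    also have "\<dots> \<le> (\<Sum>bs\<in>?G. ?x ^ cntT bs)"
    proof (intro sum_mono)
      fix bs assume "bs \<in> ?G"
      then have "bs \<in> bl n" by simp
      then have "opnorm (Gb bs) \<le> (1 * (?x ^ cntT bs * 1)) * opnorm A"
        using cbF k A unfolding cbb_def Gb_def by (simp add: mult.commute)
      also have "\<dots> \<le> ?x ^ cntT bs" using nA x0 by (simp add: mult_left_le)
      finally show "cmod (1::complex) * opnorm (Gb bs) \<le> ?x ^ cntT bs" by simp
    qed
    finally show "opnorm ?M \<le> (\<Sum>bs\<in>?G. ?x ^ cntT bs)" .
  qed
qed

lemma pow_bound_main:
  fixes x :: real and n q :: nat
  assumes qn: "q < n" and q1: "1 \<le> q" and x0: "0 \<le> x" and xy: "x \<le> real q / (real n - real q)"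
  shows "(\<Sum>j\<le>n. real (n choose j) * (if q \<le> j then x^j else 0))
     \<le> x^q * ((real n / real q)^q * (real n / (real n - real q))^(n-q))"
proof -
  define y where "y = real q / (real n - real q)"
  have nq: "0 < real n - real q" using qn by simp
  have y0: "0 < y" unfolding y_def using q1 nq by simp
  define S where "S = (\<Sum>j\<le>n. real (n choose j) * (if q \<le> j then y^(j-q) else 0))"
  have step1: "(\<Sum>j\<le>n. real (n choose j) * (if q \<le> j then x^j else 0)) \<le> x^q * S"
    unfolding S_def sum_distrib_left
  proof (intro sum_mono)
    fix j assume "j \<in> {..n}"
    show "real (n choose j) * (if q \<le> j then x^j else 0) \<le> x^q * (real (n choose j) * (if q \<le> j then y^(j-q) else 0))"
    proof (cases "q \<le> j")
      case True
      have "x^j = x^q * x^(j-q)" using True by (simp add: power_add[symmetric])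
      also have "\<dots> \<le> x^q * y^(j-q)" using x0 xy unfolding y_def by (intro mult_left_mono power_mono) auto
      finally have "real (n choose j) * x^j \<le> real (n choose j) * (x^q * y^(j-q))" by (intro mult_left_mono) auto
      then show ?thesis using True by (simp add: mult.left_commute)
    qed simp
  qed
  have "y^q * S = (\<Sum>j\<le>n. real (n choose j) * (if q \<le> j then y^j else 0))"
    unfolding S_def sum_distrib_left
    by (intro sum.cong refl) (auto simp: power_add[symmetric] mult.left_commute)
  also have "\<dots> \<le> (\<Sum>j\<le>n. real (n choose j) * y^j)"
    using y0 by (intro sum_mono) auto
  also have "\<dots> = (1 + y)^n" using binomial_ring[of y 1 n] by (simp add: add.commute mult.commute)
  also have "1 + y = real n / (real n - real q)" unfolding y_def using nq by (simp add: field_simps)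
  finally have yS: "y^q * S \<le> (real n / (real n - real q))^n" .
  have "y^q * ((real n / real q)^q * (real n / (real n - real q))^(n-q))
      = (y * (real n / real q))^q * (real n / (real n - real q))^(n-q)" by (simp only: power_mult_distrib mult.assoc)
  also have "y * (real n / real q) = real n / (real n - real q)" unfolding y_def using q1 nq by (simp add: field_simps)
  also have "(real n / (real n - real q))^q * (real n / (real n - real q))^(n-q) = (real n / (real n - real q))^n"
    using qn by (simp add: power_add[symmetric])
  finally have eqB: "y^q * ((real n / real q)^q * (real n / (real n - real q))^(n-q)) = (real n / (real n - real q))^n" .
  have "S \<le> (real n / real q)^q * (real n / (real n - real q))^(n-q)"
  proof -
    have "y^q * S \<le> y^q * ((real n / real q)^q * (real n / (real n - real q))^(n-q))" using yS eqB by simp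
    then show ?thesis using y0 by (simp add: mult_le_cancel_left_pos)
  qed
  then have "x^q * S \<le> x^q * ((real n / real q)^q * (real n / (real n - real q))^(n-q))"
    using x0 by (intro mult_left_mono) auto
  then show ?thesis using step1 by linarith
qed

lemma count_sum: "(\<Sum>bs\<in>bl n. g (cntT bs)) = (\<Sum>j\<le>n. real (n choose j) * g j)"
proof (induction n arbitrary: g)
  case 0 then show ?case by (simp add: cntT_def)
next
  case (Suc n)
  have ct: "cntT (True # bs) = Suc (cntT bs)" "cntT (False # bs) = cntT bs" for bs by (simp_all add: cntT_def)
  have "(\<Sum>bs\<in>bl (Suc n). g (cntT bs)) = (\<Sum>bs\<in>Cons True ` bl n. g (cntT bs)) + (\<Sum>bs\<in>Cons False ` bl n. g (cntT bs))"
    by (simp only: bl.simps, rule sum.union_disjoint) auto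
  also have "\<dots> = (\<Sum>bs\<in>bl n. g (Suc (cntT bs))) + (\<Sum>bs\<in>bl n. g (cntT bs))"
    by (simp add: sum.reindex ct)
  also have "\<dots> = (\<Sum>j\<le>n. real (n choose j) * g (Suc j)) + (\<Sum>j\<le>n. real (n choose j) * g j)"
    using Suc.IH[of "\<lambda>j. g (Suc j)"] Suc.IH[of g] by simp
  also have "(\<Sum>j\<le>n. real (n choose j) * g j) = g 0 + (\<Sum>j\<le>n. real (n choose Suc j) * g (Suc j))"
  proof -
    have "(\<Sum>j\<le>Suc n. real (n choose j) * g j) = (\<Sum>j\<le>n. real (n choose j) * g j)"
      by (simp add: sum.atMost_Suc)
    moreover have "(\<Sum>j\<le>Suc n. real (n choose j) * g j) = g 0 + (\<Sum>j\<le>n. real (n choose Suc j) * g (Suc j))"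
      unfolding sum.atMost_Suc_shift by simp
    ultimately show ?thesis by (simp add: binomial_eq_0)
  qed
  also have "(\<Sum>j\<le>n. real (n choose j) * g (Suc j)) + (g 0 + (\<Sum>j\<le>n. real (n choose Suc j) * g (Suc j)))
      = g 0 + (\<Sum>j\<le>n. real (Suc n choose Suc j) * g (Suc j))"
    by (simp add: sum.distrib[symmetric] algebra_simps)
  also have "\<dots> = (\<Sum>j\<le>Suc n. real (Suc n choose j) * g j)"
    unfolding sum.atMost_Suc_shift by simp
  finally show ?case .
qed

lemma powr_log2: assumes "0 < z" shows "2 powr (c * log 2 z) = z powr c"
proof -
  have "z powr c = (2 powr (log 2 z)) powr c" using assms by simp
  also have "\<dots> = 2 powr (log 2 z * c)" by (rule powr_powr)
  finally show ?thesis by (simp add: mult.commute)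
qed

lemma H2_identity:
  fixes n q :: nat
  assumes q1: "1 \<le> q" and qn: "q < n"
  shows "2 powr (real n * H2 (real q / real n)) = (real n / real q)^q * (real n / (real n - real q))^(n-q)"
proof -
  have n0: "0 < real n" using qn by simp
  have nq: "0 < real n - real q" using qn by simp
  have q0: "0 < real q" using q1 by simp
  have e1: "real n * H2 (real q / real n) = real q * log 2 (real n / real q) + (real n - real q) * log 2 (real n / (real n - real q))"
  proof -
    have a: "1 - real q / real n = (real n - real q) / real n" using n0 by (simp add: field_simps)
    have b: "log 2 (real q / real n) = - log 2 (real n / real q)" using n0 q0 by (simp add: log_divide)
    have c: "log 2 ((real n - real q) / real n) = - log 2 (real n / (real n - real q))" using n0 nq by (simp add: log_divide)
    show ?thesis unfolding H2_def a b c using n0 by (simp add: field_simps)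
  qed
  have "2 powr (real n * H2 (real q / real n)) =
      2 powr (real q * log 2 (real n / real q)) * 2 powr ((real n - real q) * log 2 (real n / (real n - real q)))"
    unfolding e1 by (rule powr_add)
  also have "\<dots> = (real n / real q) powr (real q) * (real n / (real n - real q)) powr (real n - real q)"
    using n0 q0 nq by (simp add: powr_log2)
  also have "(real n / real q) powr (real q) = (real n / real q)^q" using n0 q0 by (simp add: powr_realpow)
  also have "(real n / (real n - real q)) powr (real n - real q) = (real n / (real n - real q))^(n-q)"
    using n0 nq qn by (simp add: powr_realpow[symmetric] of_nat_diff)
  finally show ?thesis .
qed

lemma final_numeric:
  fixes n f :: nat and x :: real
  assumes fn: "f + 1 \<le> n" and x0: "0 \<le> x"
    and xb: "f + 1 < n \<longrightarrow> x \<le> real (f + 1) / (real n - real f - 1)"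
  shows "(\<Sum>j\<le>n. real (n choose j) * (if f+1 \<le> j then x^j else 0)) \<le> x ^ (f + 1) * 2 powr (real n * H2 (real (f + 1) / real n))"
proof (cases "f + 1 < n")
  case True
  have "real n - real f - 1 = real n - real (f+1)" by simp
  then have xb': "x \<le> real (f+1) / (real n - real (f+1))" using xb True by metis
  have "(\<Sum>j\<le>n. real (n choose j) * (if f+1 \<le> j then x^j else 0))
      \<le> x^(f+1) * ((real n / real (f+1))^(f+1) * (real n / (real n - real (f+1)))^(n-(f+1)))"
    by (rule pow_bound_main[OF True _ x0 xb']) simp
  also have "\<dots> = x ^ (f + 1) * 2 powr (real n * H2 (real (f + 1) / real n))"
    using H2_identity[of "f+1" n] True by simp
  finally show ?thesis .
next
  case False
  then have nf: "n = f + 1" using fn by simp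
  have "(\<Sum>j\<le>n. real (n choose j) * (if f+1 \<le> j then x^j else 0)) = (\<Sum>j\<le>f. real (n choose j) * (if f+1 \<le> j then x^j else 0)) + x^n"
    unfolding nf by (simp add: sum.atMost_Suc)
  also have "(\<Sum>j\<le>f. real (n choose j) * (if f+1 \<le> j then x^j else 0)) = 0" by simp
  finally have s: "(\<Sum>j\<le>n. real (n choose j) * (if f+1 \<le> j then x^j else 0)) = x^n" by simp
  have "H2 (real (f + 1) / real n) = 0" unfolding nf H2_def by simp
  then show ?thesis using s nf by simp
qed

theorem proposition2:
  fixes d m n f :: nat and T E D :: "complex mat \<Rightarrow> complex mat"
  assumes "channel d d T"
    and "channel (d^n) (d^m) E"
    and "channel (d^m) (d^n) D"
    and "corrects d m n f E D"
    and "f + 1 \<le> n"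
    and "f + 1 < n \<longrightarrow>
           cb_norm d d (\<lambda>X. T X - X) \<le> real (f + 1) / (real n - real f - 1)"
  shows "cb_norm (d^m) (d^m) (\<lambda>X. E (tensor_pow d T n (D X)) - X)
           \<le> cb_norm d d (\<lambda>X. T X - X) ^ (f + 1) * 2 powr (real n * H2 (real (f + 1) / real n))"
proof -
  note T = assms(1) and E = assms(2) and D = assms(3) and C = assms(4)
  let ?x = "cb_norm d d (\<lambda>X. T X - X)"
  let ?R = "?x ^ (f + 1) * 2 powr (real n * H2 (real (f + 1) / real n))"
  have bdD: "\<And>k A. 0 < k \<Longrightarrow> A \<in> carrier_mat (d*k) (d*k) \<Longrightarrow> opnorm A \<le> 1 \<Longrightarrow>
     opnorm (map_tensor d d k k (\<lambda>X. T X - X) (\<lambda>X. X) A) \<le> 2" using delta_bound[OF T] by blast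
  have x0: "0 \<le> ?x" using cbb_cb(2)[OF bdD] .
  have R0: "0 \<le> ?R" using x0 by simp
  show ?thesis
  proof (cases "d = 0")
    case True
    have n1: "0 < n" using assms(5) by simp
    have m1: "0 < m"
    proof (rule ccontr)
      assume "\<not> 0 < m"
      then have m0: "m = 0" by simp
      have Elin: "lin_map 0 1 E" and u: "E (1\<^sub>m 0) = 1\<^sub>m 1"
      proof -
        have e: "d^n = 0" using True n1 by (simp add: zero_power)
        have "channel 0 1 E" using E unfolding e m0 power_0 .
        then show "lin_map 0 1 E" "E (1\<^sub>m 0) = 1\<^sub>m 1" unfolding channel_def by auto
      qed
      have z: "(0::complex) \<cdot>\<^sub>m 1\<^sub>m 0 = 1\<^sub>m 0" by (intro eq_matI) auto
      have "E ((0::complex) \<cdot>\<^sub>m 1\<^sub>m 0) = (0::complex) \<cdot>\<^sub>m E (1\<^sub>m 0)"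
        using Elin unfolding lin_map_def by auto
      then have "1\<^sub>m 1 = (0::complex) \<cdot>\<^sub>m (1\<^sub>m 1 :: complex mat)" using z u by simp
      then have "(1\<^sub>m 1 :: complex mat) $$ (0,0) = ((0::complex) \<cdot>\<^sub>m (1\<^sub>m 1 :: complex mat)) $$ (0,0)" by simp
      then show False by simp
    qed
    have dm: "d^m = 0" using True m1 by simp
    have "cb_norm (d^m) (d^m) (\<lambda>X. E (tensor_pow d T n (D X)) - X) \<le> 0"
    proof (rule cb_le)
      fix k :: nat and A :: "complex mat"
      have "map_tensor (d^m) (d^m) k k (\<lambda>X. E (tensor_pow d T n (D X)) - X) (\<lambda>X. X) A = 0\<^sub>m 0 0"
        using dm by (intro eq_matI) auto
      then show "opnorm (map_tensor (d^m) (d^m) k k (\<lambda>X. E (tensor_pow d T n (D X)) - X) (\<lambda>X. X) A) \<le> 0"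
        by (simp add: opnorm_zero)
    qed
    then show ?thesis using R0 by linarith
  next
    case False
    then have d: "0 < d" by simp
    have "cb_norm (d^m) (d^m) (\<lambda>X. E (tensor_pow d T n (D X)) - X)
        \<le> (\<Sum>bs\<in>{bs\<in>bl n. f+1 \<le> cntT bs}. ?x ^ cntT bs)"
      by (rule LHS_bound[OF T E D C d])
    also have "\<dots> = (\<Sum>bs\<in>bl n. (\<lambda>j. if f+1 \<le> j then ?x^j else 0) (cntT bs))"
      by (simp add: sum.inter_filter)
    also have "\<dots> = (\<Sum>j\<le>n. real (n choose j) * (if f+1 \<le> j then ?x^j else 0))"
      by (rule count_sum)
    also have "\<dots> \<le> ?R"
      by (rule final_numeric[OF assms(5) x0 assms(6)])
    finally show ?thesis .
  qed
qed

end
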